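(* Let $K\in\mathbb{N}$, $L>0$, and let $\mathbf{x}$ be a random vector in $\mathbb{R}^K$ with probability density function $p\colon\mathbb{R}^K\to\mathbb{R}_+$ such that $\Pr(\mathbf{x}\in[0,1]^K)=1$ and $p$ is $L$-Lipschitz on $\mathbb{R}^K$ with respect to the $\ell_1$-norm, i.e. $|p(\mathbf{x})-p(\mathbf{y})|\le L\|\mathbf{x}-\mathbf{y}\|_1$ for all $\mathbf{x},\mathbf{y}\in\mathbb{R}^K$. Let $\mathcal{D}=(\mathbf{x}_1,\dots,\mathbf{x}_N)$ be $N$ i.i.d. copies of $\mathbf{x}$, let $M\in\mathbb{N}$, and define the estimator \[ \hat h(\mathcal{D}) := H(\tilde{\mathbf{y}}) - K\log M, \] where $\tilde{\mathbf{y}}=\Delta_M(\mathbf{y})$, $\mathbf{y}$ is distributed according to the empirical distribution of $\mathcal{D}$ (i.e. $\mathbf{y}=\mathbf{x}_u$ with $u$ uniform on $\{1,\dots,N\}$), $\Delta_M$ acts element-wise by $\Delta_M(x)=\lfloor Mx\rfloor/M$, and $H$ denotes Shannon entropy (computed for the given sample, so $\hat h(\mathcal D)$ is the Shannon entropy of the empirical distribution of the quantized samples minus $K\log M$). Define \[ \eta(K,L):=\frac1K\Big(\frac{2(K+1)!}{L}\Big)^{\frac1{K+1}},\qquad \alpha:=\frac{\sqrt{e^2+4}-e}{2e}. \] If $M\ge\frac{1}{\alpha\,\eta(K,L)}$, then for any $\delta\in(0,1)$, with probability greater than $1-\delta$, \[ \big|\hat h(\mathcal{D})-h(\mathbf{x})\big|\le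 \frac{LK}{2M}\log\big(M\eta(K,L)\big)+\sqrt{\frac2N\log\frac2\delta}\,\log N+\log\Big(1+\frac{M^K-1}{N}\Big). \]
   Context: $h(\mathbf{x})=-\int p\log p\,\mathrm{d}\lambda^K$ is the differential entropy of $\mathbf{x}$. Equivalently, $\hat h(\mathcal D)-\!(-K\log M)$ is $-\sum_j \frac{n_j}{N}\log\frac{n_j}{N}$, where $n_j$ is the number of samples whose element-wise quantization $\Delta_M(\mathbf{x}_i)$ equals the $j$-th grid point. *)

theory Defs
  imports "HOL-Probability.Probability"
begin

definition quantize :: "nat \<Rightarrow> real ^ 'n \<Rightarrow> real ^ 'n" where
  "quantize M v = (\<chi> i. real_of_int \<lfloor>real M * v $ i\<rfloor> / real M)"

definition shannon_entropy :: "'a pmf \<Rightarrow> real" where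
  "shannon_entropy q = - (\<Sum>y\<in>set_pmf q. pmf q y * ln (pmf q y))"

definition quantized_empirical :: "nat \<Rightarrow> nat \<Rightarrow> (nat \<Rightarrow> real ^ 'n) \<Rightarrow> (real ^ 'n) pmf" where
  "quantized_empirical M N xs = map_pmf (\<lambda>u. quantize M (xs u)) (pmf_of_set {..<N})"

definition entropy_estimator :: "nat \<Rightarrow> nat \<Rightarrow> (nat \<Rightarrow> real ^ 'n) \<Rightarrow> real" where
  "entropy_estimator M N xs =
     shannon_entropy (quantized_empirical M N xs) - real CARD('n) * ln (real M)"

definition diff_entropy :: "(real ^ 'n \<Rightarrow> real) \<Rightarrow> real" where
  "diff_entropy p = - (\<integral>x. p x * ln (p x) \<partial>lborel)"

definition unit_cube :: "(real ^ 'n) set" where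
  "unit_cube = {v. \<forall>i. 0 \<le> v $ i \<and> v $ i \<le> 1}"

definition eta :: "nat \<Rightarrow> real \<Rightarrow> real" where
  "eta K L = (1 / real K) * (2 * fact (K + 1) / L) powr (1 / real (K + 1))"

definition alpha_const :: real where
  "alpha_const = (sqrt ((exp 1)\<^sup>2 + 4) - exp 1) / (2 * exp 1)"

end

theory Submission
  imports Defs "HOL-Probability.Probability"
begin

lemma mcdiarmid_mgf:
  fixes Q :: "'b measure" and f :: "(nat \<Rightarrow> 'b) \<Rightarrow> real"
  assumes Q: "prob_space Q" and l: "l > 0"
  shows "f \<in> borel_measurable (PiM {..<n} (\<lambda>_. Q)) \<Longrightarrow>
    (\<forall>xs\<in>space (PiM {..<n} (\<lambda>_. Q)). \<bar>f xs\<bar> \<le> B) \<Longrightarrow>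
    (\<forall>xs\<in>space (PiM {..<n} (\<lambda>_. Q)). \<forall>i<n. \<forall>y\<in>space Q. \<bar>f xs - f (xs(i:=y))\<bar> \<le> c) \<Longrightarrow>
    (\<integral>\<^sup>+xs. ennreal (exp (l * (f xs - (\<integral>xs. f xs \<partial>PiM {..<n} (\<lambda>_. Q))))) \<partial>PiM {..<n} (\<lambda>_. Q))
      \<le> ennreal (exp (l\<^sup>2 * real n * c\<^sup>2 / 8))"
proof (induction n arbitrary: f)
  case 0
  have "(\<integral>\<^sup>+xs. ennreal (exp (l * (f xs - (\<integral>xs. f xs \<partial>PiM {..<0::nat} (\<lambda>_. Q))))) \<partial>PiM {..<0::nat} (\<lambda>_. Q)) = 1"
    by (simp add: PiM_empty nn_integral_count_space_finite lebesgue_integral_count_space_finite)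
  then show ?case by simp
next
  case (Suc n)
  interpret Q: prob_space Q by (rule Q)
  interpret PP: product_prob_space "\<lambda>_::nat. Q" by unfold_locales
  let ?PI = "PiM {..<n} (\<lambda>_. Q)"
  let ?PS = "PiM {..<Suc n} (\<lambda>_. Q)"
  interpret PI: prob_space ?PI by (rule prob_space_PiM) (rule Q)
  interpret PS: prob_space ?PS by (rule prob_space_PiM) (rule Q)
  have PSeq: "?PS = PiM (insert n {..<n}) (\<lambda>_. Q)" by (simp add: lessThan_Suc)
  have fm[measurable]: "f \<in> borel_measurable (PiM (insert n {..<n}) (\<lambda>_. Q))"
    using Suc.prems(1) PSeq by simp
  define g where "g = (\<lambda>xs. \<integral>y. f (xs(n:=y)) \<partial>Q)"
  have upd_space: "xs(n:=y) \<in> space ?PS" if "xs \<in> space ?PI" "y \<in> space Q" for xs y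
    using that by (auto simp: space_PiM PiE_iff extensional_def)
  have upd_space2: "xs(i:=y) \<in> space ?PI" if "xs \<in> space ?PI" "y \<in> space Q" "i < n" for xs y i
    using that by (auto simp: space_PiM PiE_iff extensional_def)
  have fupd_m: "(\<lambda>y. f (xs(n:=y))) \<in> borel_measurable Q" if "xs \<in> space ?PI" for xs
    using measurable_comp[OF measurable_component_update fm, OF that] by (simp add: comp_def fun_upd_def)
  have fb: "\<bar>f (xs(n:=y))\<bar> \<le> B" if "xs \<in> space ?PI" "y \<in> space Q" for xs y
    using Suc.prems(2) upd_space[OF that] by blast
  have fint: "integrable Q (\<lambda>y. f (xs(n:=y)))" if "xs \<in> space ?PI" for xs
    using fupd_m[OF that] fb[OF that] by (intro Q.integrable_const_bound[where B=B]) auto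
  have gm[measurable]: "g \<in> borel_measurable ?PI"
  proof -
    have "(\<lambda>z. f ((fst z)(n := snd z))) \<in> borel_measurable (?PI \<Otimes>\<^sub>M Q)"
      using measurable_comp[OF measurable_add_dim[of n "{..<n}" "\<lambda>_. Q"] fm]
      by (simp add: comp_def case_prod_beta)
    then show ?thesis unfolding g_def by measurable
  qed
  have gb: "\<forall>xs\<in>space ?PI. \<bar>g xs\<bar> \<le> B"
  proof
    fix xs assume xs: "xs \<in> space ?PI"
    have "\<bar>g xs\<bar> \<le> (\<integral>y. \<bar>f (xs(n:=y))\<bar> \<partial>Q)" unfolding g_def by (rule integral_abs_bound)
    also have "\<dots> \<le> (\<integral>y. B \<partial>Q)"
      using fint[OF xs] fb[OF xs] by (intro integral_mono) auto
    finally show "\<bar>g xs\<bar> \<le> B" by (simp add: Q.prob_space)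
  qed
  have gd: "\<forall>xs\<in>space ?PI. \<forall>i<n. \<forall>y\<in>space Q. \<bar>g xs - g (xs(i:=y))\<bar> \<le> c"
  proof (intro ballI allI impI)
    fix xs i y assume xs: "xs \<in> space ?PI" and i: "i < n" and y: "y \<in> space Q"
    have xs': "xs(i:=y) \<in> space ?PI" by (rule upd_space2[OF xs y i])
    have "g xs - g (xs(i:=y)) = (\<integral>z. f (xs(n:=z)) - f ((xs(i:=y))(n:=z)) \<partial>Q)"
      unfolding g_def using fint[OF xs] fint[OF xs'] by simp
    also have "\<bar>\<dots>\<bar> \<le> (\<integral>z. \<bar>f (xs(n:=z)) - f ((xs(i:=y))(n:=z))\<bar> \<partial>Q)" by (rule integral_abs_bound)
    also have "\<dots> \<le> (\<integral>z. c \<partial>Q)"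
    proof (intro integral_mono)
      show "integrable Q (\<lambda>z. \<bar>f (xs(n:=z)) - f ((xs(i:=y))(n:=z))\<bar>)"
        using fint[OF xs] fint[OF xs'] by auto
      fix z assume z: "z \<in> space Q"
      have "(xs(i:=y))(n:=z) = (xs(n:=z))(i:=y)" using i by (auto simp: fun_eq_iff)
      then show "\<bar>f (xs(n:=z)) - f ((xs(i:=y))(n:=z))\<bar> \<le> c"
      proof -
        have "\<forall>i<Suc n. \<forall>y\<in>space Q. \<bar>f (xs(n:=z)) - f ((xs(n:=z))(i:=y))\<bar> \<le> c"
          using bspec[OF Suc.prems(3) upd_space[OF xs z]] .
        then have "\<bar>f (xs(n:=z)) - f ((xs(n:=z))(i:=y))\<bar> \<le> c" using i y less_SucI[OF i] by blast
        then show ?thesis using \<open>(xs(i:=y))(n:=z) = (xs(n:=z))(i:=y)\<close> by simp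
      qed
    qed auto
    finally show "\<bar>g xs - g (xs(i:=y))\<bar> \<le> c" by (simp add: Q.prob_space)
  qed
  have IH: "(\<integral>\<^sup>+xs. ennreal (exp (l * (g xs - (\<integral>xs. g xs \<partial>?PI)))) \<partial>?PI) \<le> ennreal (exp (l\<^sup>2 * real n * c\<^sup>2 / 8))"
    by (rule Suc.IH[OF gm gb gd])
  have fintS: "integrable ?PS f"
    using Suc.prems(1,2) by (intro PS.integrable_const_bound[where B=B]) auto
  have Ef: "(\<integral>xs. f xs \<partial>?PS) = (\<integral>xs. g xs \<partial>?PI)"
    unfolding PSeq g_def
    by (rule PP.product_integral_insert) (use fintS PSeq in auto)
  define E where "E = (\<integral>xs. g xs \<partial>?PI)"
  have inner: "(\<integral>\<^sup>+y. ennreal (exp (l * (f (xs(n:=y)) - E))) \<partial>Q)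
      \<le> ennreal (exp (l * (g xs - E))) * ennreal (exp (l\<^sup>2 * c\<^sup>2 / 8))" if xs: "xs \<in> space ?PI" for xs
  proof -
    define a where "a = (INF y\<in>space Q. f (xs(n:=y)))"
    have ne: "space Q \<noteq> {}" by (rule Q.not_empty)
    have bdd: "bdd_below ((\<lambda>y. f (xs(n:=y))) ` space Q)"
    proof (rule bdd_belowI[where m="-B"])
      fix v assume "v \<in> (\<lambda>y. f (xs(n:=y))) ` space Q"
      then obtain y where y: "y \<in> space Q" "v = f (xs(n:=y))" by blast
      have "\<bar>f (xs(n:=y))\<bar> \<le> B" by (rule fb[OF xs y(1)])
      then show "-B \<le> v" using y(2) by linarith
    qed
    have low: "a \<le> f (xs(n:=y))" if "y \<in> space Q" for y
      unfolding a_def using bdd that by (rule cINF_lower)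
    have up: "f (xs(n:=y)) \<le> a + c" if y: "y \<in> space Q" for y
    proof -
      have "f (xs(n:=y)) - c \<le> a"
        unfolding a_def
      proof (rule cINF_greatest[OF ne])
        fix y' assume y': "y' \<in> space Q"
        have "\<bar>f (xs(n:=y)) - f ((xs(n:=y))(n:=y'))\<bar> \<le> c"
        proof -
          have "\<forall>i<Suc n. \<forall>z\<in>space Q. \<bar>f (xs(n:=y)) - f ((xs(n:=y))(i:=z))\<bar> \<le> c"
            using bspec[OF Suc.prems(3) upd_space[OF xs y]] .
          then show ?thesis using y' lessI[of n] by blast
        qed
        then show "f (xs(n:=y)) - c \<le> f (xs(n:=y'))" by auto
      qed
      then show ?thesis by simp
    qed
    interpret ib: interval_bounded_random_variable Q "\<lambda>y. f (xs(n:=y))" a "a + c"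
    proof unfold_locales
      show "Q.random_variable borel (\<lambda>y. f (xs(n:=y)))" by (rule fupd_m[OF xs])
      show "AE y in Q. f (xs(n:=y)) \<in> {a..a + c}"
        using low up by (intro AE_I2) auto
    qed
    have H: "(\<integral>\<^sup>+y. ennreal (exp (l * (f (xs(n:=y)) - g xs))) \<partial>Q) \<le> ennreal (exp (l\<^sup>2 * (a + c - a)\<^sup>2 / 8))"
      using ib.Hoeffdings_lemma_nn_integral[OF l] unfolding g_def by simp
    have "(\<integral>\<^sup>+y. ennreal (exp (l * (f (xs(n:=y)) - E))) \<partial>Q)
        = (\<integral>\<^sup>+y. ennreal (exp (l * (g xs - E))) * ennreal (exp (l * (f (xs(n:=y)) - g xs))) \<partial>Q)"
      by (intro nn_integral_cong) (simp add: ennreal_mult'[symmetric] exp_add[symmetric] algebra_simps)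
    also have "\<dots> = ennreal (exp (l * (g xs - E))) * (\<integral>\<^sup>+y. ennreal (exp (l * (f (xs(n:=y)) - g xs))) \<partial>Q)"
      by (rule nn_integral_cmult) (use fupd_m[OF xs] in measurable)
    also have "\<dots> \<le> ennreal (exp (l * (g xs - E))) * ennreal (exp (l\<^sup>2 * c\<^sup>2 / 8))"
      using H by (intro mult_left_mono) auto
    finally show ?thesis .
  qed
  have "(\<integral>\<^sup>+xs. ennreal (exp (l * (f xs - (\<integral>xs. f xs \<partial>?PS)))) \<partial>?PS)
      = (\<integral>\<^sup>+xs. ennreal (exp (l * (f xs - E))) \<partial>PiM (insert n {..<n}) (\<lambda>_. Q))"
    using Ef PSeq E_def by simp
  also have "\<dots> = (\<integral>\<^sup>+xs. (\<integral>\<^sup>+y. ennreal (exp (l * (f (xs(n:=y)) - E))) \<partial>Q) \<partial>?PI)"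
    by (rule PP.product_nn_integral_insert) auto
  also have "\<dots> \<le> (\<integral>\<^sup>+xs. ennreal (exp (l * (g xs - E))) * ennreal (exp (l\<^sup>2 * c\<^sup>2 / 8)) \<partial>?PI)"
    by (intro nn_integral_mono inner)
  also have "\<dots> = (\<integral>\<^sup>+xs. ennreal (exp (l * (g xs - E))) \<partial>?PI) * ennreal (exp (l\<^sup>2 * c\<^sup>2 / 8))"
    by (rule nn_integral_multc) measurable
  also have "\<dots> \<le> ennreal (exp (l\<^sup>2 * real n * c\<^sup>2 / 8)) * ennreal (exp (l\<^sup>2 * c\<^sup>2 / 8))"
    using IH E_def by (intro mult_right_mono) auto
  also have "\<dots> = ennreal (exp (l\<^sup>2 * real (Suc n) * c\<^sup>2 / 8))"
    by (simp add: ennreal_mult'[symmetric] exp_add[symmetric] algebra_simps)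
  finally show ?case .
qed

lemma mcdiarmid_upper:
  fixes Q :: "'b measure" and f :: "(nat \<Rightarrow> 'b) \<Rightarrow> real"
  assumes Q: "prob_space Q" and c: "c > 0" and n: "n > 0" and t: "t > 0"
  assumes fm: "f \<in> borel_measurable (PiM {..<n} (\<lambda>_. Q))"
    and fb: "\<forall>xs\<in>space (PiM {..<n} (\<lambda>_. Q)). \<bar>f xs\<bar> \<le> B"
    and fd: "\<forall>xs\<in>space (PiM {..<n} (\<lambda>_. Q)). \<forall>i<n. \<forall>y\<in>space Q. \<bar>f xs - f (xs(i:=y))\<bar> \<le> c"
  shows "measure (PiM {..<n} (\<lambda>_. Q)) {xs\<in>space (PiM {..<n} (\<lambda>_. Q)). f xs - (\<integral>xs. f xs \<partial>PiM {..<n} (\<lambda>_. Q)) \<ge> t}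
     \<le> exp (-2 * t\<^sup>2 / (real n * c\<^sup>2))"
proof -
  let ?P = "PiM {..<n} (\<lambda>_. Q)"
  interpret P: prob_space ?P by (rule prob_space_PiM) (rule Q)
  define E where "E = (\<integral>xs. f xs \<partial>?P)"
  define l where "l = 4 * t / (real n * c\<^sup>2)"
  have l: "l > 0" using c n t by (simp add: l_def)
  have [measurable]: "f \<in> borel_measurable ?P" by (rule fm)
  have "ennreal (measure ?P {xs\<in>space ?P. f xs - E \<ge> t}) = emeasure ?P {xs\<in>space ?P. f xs - E \<ge> t}"
    by (simp add: P.emeasure_eq_measure)
  also have "\<dots> \<le> ennreal (exp (-l * t)) * (\<integral>\<^sup>+xs. ennreal (exp (l * (f xs - E))) * indicator (space ?P) xs \<partial>?P)"
    by (rule Chernoff_ineq_nn_integral_ge[OF l]) measurable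
  also have "(\<integral>\<^sup>+xs. ennreal (exp (l * (f xs - E))) * indicator (space ?P) xs \<partial>?P) = (\<integral>\<^sup>+xs. ennreal (exp (l * (f xs - E))) \<partial>?P)"
    by (intro nn_integral_cong) auto
  also have "\<dots> \<le> ennreal (exp (l\<^sup>2 * real n * c\<^sup>2 / 8))"
    unfolding E_def by (rule mcdiarmid_mgf[OF Q l fm fb fd])
  also have "ennreal (exp (-l * t)) * ennreal (exp (l\<^sup>2 * real n * c\<^sup>2 / 8)) = ennreal (exp (-l * t + l\<^sup>2 * real n * c\<^sup>2 / 8))"
    using exp_add[of "-l*t" "l\<^sup>2 * real n * c\<^sup>2 / 8"] by (simp add: ennreal_mult'[symmetric])
  also have "-l * t + l\<^sup>2 * real n * c\<^sup>2 / 8 = -2 * t\<^sup>2 / (real n * c\<^sup>2)"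
    using c n by (simp add: l_def field_simps power2_eq_square)
  finally have "ennreal (measure ?P {xs\<in>space ?P. f xs - E \<ge> t}) \<le> ennreal (exp (-2 * t\<^sup>2 / (real n * c\<^sup>2)))"
    by (simp add: mult_left_mono del: ennreal_le_iff)
  then show ?thesis unfolding E_def by (subst (asm) ennreal_le_iff) auto
qed

lemma mcdiarmid_abs:
  fixes Q :: "'b measure" and f :: "(nat \<Rightarrow> 'b) \<Rightarrow> real"
  assumes Q: "prob_space Q" and c: "c > 0" and n: "n > 0" and t: "t > 0"
  assumes fm: "f \<in> borel_measurable (PiM {..<n} (\<lambda>_. Q))"
    and fb: "\<forall>xs\<in>space (PiM {..<n} (\<lambda>_. Q)). \<bar>f xs\<bar> \<le> B"
    and fd: "\<forall>xs\<in>space (PiM {..<n} (\<lambda>_. Q)). \<forall>i<n. \<forall>y\<in>space Q. \<bar>f xs - f (xs(i:=y))\<bar> \<le> c"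
  shows "measure (PiM {..<n} (\<lambda>_. Q)) {xs\<in>space (PiM {..<n} (\<lambda>_. Q)). \<bar>f xs - (\<integral>xs. f xs \<partial>PiM {..<n} (\<lambda>_. Q))\<bar> \<ge> t}
     \<le> 2 * exp (-2 * t\<^sup>2 / (real n * c\<^sup>2))"
proof -
  let ?P = "PiM {..<n} (\<lambda>_. Q)"
  interpret P: prob_space ?P by (rule prob_space_PiM) (rule Q)
  define E where "E = (\<integral>xs. f xs \<partial>?P)"
  have [measurable]: "f \<in> borel_measurable ?P" by (rule fm)
  have fb': "\<forall>xs\<in>space ?P. \<bar>- f xs\<bar> \<le> B" using fb by simp
  have fd': "\<forall>xs\<in>space ?P. \<forall>i<n. \<forall>y\<in>space Q. \<bar>(- f xs) - (- f (xs(i:=y)))\<bar> \<le> c"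
  proof (intro ballI allI impI)
    fix xs i y assume "xs \<in> space ?P" "i < n" "y \<in> space Q"
    then have "\<bar>f xs - f (xs(i:=y))\<bar> \<le> c" using fd by blast
    then show "\<bar>(- f xs) - (- f (xs(i:=y)))\<bar> \<le> c" by linarith
  qed
  have "{xs\<in>space ?P. \<bar>f xs - E\<bar> \<ge> t} = {xs\<in>space ?P. f xs - E \<ge> t} \<union> {xs\<in>space ?P. (- f xs) - (\<integral>xs. - f xs \<partial>?P) \<ge> t}"
    by (auto simp: E_def)
  also have "measure ?P \<dots> \<le> measure ?P {xs\<in>space ?P. f xs - E \<ge> t} + measure ?P {xs\<in>space ?P. (- f xs) - (\<integral>xs. - f xs \<partial>?P) \<ge> t}"
    by (intro measure_Un_le) measurable
  also have "\<dots> \<le> exp (-2 * t\<^sup>2 / (real n * c\<^sup>2)) + exp (-2 * t\<^sup>2 / (real n * c\<^sup>2))"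
    unfolding E_def
    by (intro add_mono mcdiarmid_upper[OF Q c n t fm fb fd] mcdiarmid_upper[OF Q c n t _ fb' fd']) measurable
  finally show ?thesis by (simp add: E_def)
qed


lemma vec_nth_measurable[measurable]: "(\<lambda>x::real^'n. x $ j) \<in> borel_measurable borel"
  by (intro borel_measurable_continuous_onI continuous_intros)

lemma quantize_measurable[measurable]: "quantize M \<in> borel_measurable (borel :: (real ^ 'n) measure)"
proof (subst borel_measurable_euclidean_space, intro ballI)
  fix b :: "real^'n" assume "b \<in> Basis"
  then obtain j where b: "b = axis j 1" by (auto simp: Basis_vec_def)
  show "(\<lambda>x. quantize M x \<bullet> b) \<in> borel_measurable borel"
    unfolding b quantize_def inner_axis by simp
qed

definition bin :: "nat \<Rightarrow> real^'n \<Rightarrow> (real^'n) set" where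
  "bin m g = {v. quantize m v = g}"

lemma bin_sets[measurable]: "bin m g \<in> sets borel"
proof -
  have "bin m g = quantize m -` {g} \<inter> space borel" by (auto simp: bin_def)
  also have "\<dots> \<in> sets borel" by (intro measurable_sets[OF quantize_measurable]) auto
  finally show ?thesis .
qed

lemma quantize_eq_iff:
  assumes m: "m > 0"
  shows "quantize m v = quantize m w \<longleftrightarrow> (\<forall>i. \<lfloor>real m * v $ i\<rfloor> = \<lfloor>real m * w $ i\<rfloor>)"
  using m by (auto simp: quantize_def vec_eq_iff)

lemma quantize_idem:
  assumes m: "m > 0"
  shows "quantize m (quantize m v) = quantize m v"
  using m by (simp add: quantize_def vec_eq_iff)

lemma bin_box:
  fixes v0 :: "real^'n"
  assumes m: "m > 0"
  defines "a \<equiv> (\<chi> i. real_of_int \<lfloor>real m * v0 $ i\<rfloor> / real m) :: real^'n"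
  defines "b \<equiv> (\<chi> i. (real_of_int \<lfloor>real m * v0 $ i\<rfloor> + 1) / real m) :: real^'n"
  shows "box a b \<subseteq> bin m (quantize m v0)" "bin m (quantize m v0) \<subseteq> cbox a b"
proof -
  have mem: "v \<in> bin m (quantize m v0) \<longleftrightarrow> (\<forall>i. a $ i \<le> v $ i \<and> v $ i < b $ i)" for v
  proof -
    have "v \<in> bin m (quantize m v0) \<longleftrightarrow> (\<forall>i. \<lfloor>real m * v $ i\<rfloor> = \<lfloor>real m * v0 $ i\<rfloor>)"
      unfolding bin_def using quantize_eq_iff[OF m] by simp
    also have "\<dots> \<longleftrightarrow> (\<forall>i. a $ i \<le> v $ i \<and> v $ i < b $ i)"
    proof -
      have "\<lfloor>real m * v $ i\<rfloor> = \<lfloor>real m * v0 $ i\<rfloor> \<longleftrightarrow> a $ i \<le> v $ i \<and> v $ i < b $ i" for i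
        using m unfolding a_def b_def by (simp add: floor_eq_iff field_simps)
      then show ?thesis by simp
    qed
    finally show ?thesis .
  qed
  show "box a b \<subseteq> bin m (quantize m v0)"
  proof
    fix x assume "x \<in> box a b"
    then have "\<forall>i. a$i < x$i \<and> x$i < b$i" by (simp add: mem_box_cart)
    then have "\<forall>i. a$i \<le> x$i \<and> x$i < b$i" by (meson less_imp_le)
    then show "x \<in> bin m (quantize m v0)" using mem by simp
  qed
  show "bin m (quantize m v0) \<subseteq> cbox a b"
  proof
    fix x assume "x \<in> bin m (quantize m v0)"
    then have "\<forall>i. a$i \<le> x$i \<and> x$i < b$i" using mem by simp
    then have "\<forall>i. a$i \<le> x$i \<and> x$i \<le> b$i" by (meson less_imp_le)
    then show "x \<in> cbox a b" by (simp add: mem_box_cart)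
  qed
qed

lemma bin_measure:
  assumes m: "m > 0"
  shows "emeasure lborel (bin m (quantize m v0) :: (real^'n) set) = ennreal ((1 / real m) ^ CARD('n))"
    "measure lborel (bin m (quantize m v0) :: (real^'n) set) = (1 / real m) ^ CARD('n)"
proof -
  define a :: "real^'n" where "a = (\<chi> i. real_of_int \<lfloor>real m * v0 $ i\<rfloor> / real m)"
  define b :: "real^'n" where "b = (\<chi> i. (real_of_int \<lfloor>real m * v0 $ i\<rfloor> + 1) / real m)"
  have sub: "box a b \<subseteq> bin m (quantize m v0)" "bin m (quantize m v0) \<subseteq> cbox a b"
    using bin_box[OF m, of v0] unfolding a_def b_def by auto
  have eq: "emeasure lborel (box a b) = emeasure lborel (cbox a b)"
    by (simp add: emeasure_lborel_box_eq emeasure_lborel_cbox_eq)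
  have le: "a $ i \<le> b $ i" for i using m by (simp add: a_def b_def divide_right_mono)
  then have "a \<in> cbox a b" by (simp add: mem_box_cart)
  then have ne: "cbox a b \<noteq> {}" by blast
  have "measure lborel (cbox a b) = (\<Prod>i\<in>UNIV. b$i - a$i)" by (rule content_cbox_cart[OF ne])
  also have "\<dots> = (\<Prod>i\<in>(UNIV::'n set). 1 / real m)"
    by (intro prod.cong) (simp_all add: a_def b_def add_divide_distrib)
  finally have c: "measure lborel (cbox a b) = (1 / real m) ^ CARD('n)" by simp
  have "emeasure lborel (box a b) \<le> emeasure lborel (bin m (quantize m v0))"
    by (intro emeasure_mono sub) measurable
  moreover have "emeasure lborel (bin m (quantize m v0)) \<le> emeasure lborel (cbox a b)"
    by (intro emeasure_mono sub) measurable
  ultimately have e: "emeasure lborel (bin m (quantize m v0)) = emeasure lborel (cbox a b)"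
    using eq by (metis antisym)
  also have "\<dots> = ennreal (measure lborel (cbox a b))"
    using emeasure_lborel_cbox_finite[of a b] by (intro emeasure_eq_ennreal_measure) simp
  finally show "emeasure lborel (bin m (quantize m v0) :: (real^'n) set) = ennreal ((1 / real m) ^ CARD('n))"
    using c by simp
  then show "measure lborel (bin m (quantize m v0) :: (real^'n) set) = (1 / real m) ^ CARD('n)"
    by (simp add: measure_def)
qed

lemma quantize_cube_subset:
  "quantize m ` (unit_cube :: (real^'n) set) \<subseteq> (\<lambda>k. (\<chi> i. real_of_int (k i) / real m)) ` (\<Pi>\<^sub>E i\<in>UNIV. {0..int m})"
proof
  fix g assume "g \<in> quantize m ` (unit_cube :: (real^'n) set)"
  then obtain v where v: "v \<in> unit_cube" "g = quantize m v" by blast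
  define k where "k = (\<lambda>i. \<lfloor>real m * v $ i\<rfloor>)"
  have "k i \<in> {0..int m}" for i
  proof -
    have "0 \<le> v $ i" "v $ i \<le> 1" using v(1) by (auto simp: unit_cube_def)
    then have "0 \<le> real m * v $ i" "real m * v $ i \<le> real m"
      by (auto intro: mult_left_le)
    then show ?thesis unfolding k_def by (auto intro: floor_mono simp: le_floor_iff floor_le_iff)
  qed
  then have "k \<in> (\<Pi>\<^sub>E i\<in>UNIV. {0..int m})" by auto
  moreover have "g = (\<chi> i. real_of_int (k i) / real m)" unfolding v(2) k_def quantize_def by simp
  ultimately show "g \<in> (\<lambda>k. (\<chi> i. real_of_int (k i) / real m)) ` (\<Pi>\<^sub>E i\<in>UNIV. {0..int m})" by blast
qed

lemma finite_quantize_cube: "finite (quantize m ` (unit_cube :: (real^'n) set))"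
  by (rule finite_subset[OF quantize_cube_subset]) (intro finite_imageI finite_PiE; simp)

definition dens :: "(real^'n \<Rightarrow> real) \<Rightarrow> (real^'n) measure" where
  "dens p = density lborel (\<lambda>v. ennreal (p v))"

definition Pq :: "(real^'n \<Rightarrow> real) \<Rightarrow> nat \<Rightarrow> real^'n \<Rightarrow> real" where
  "Pq p m g = measure (dens p) (bin m g)"

definition Gp :: "(real^'n \<Rightarrow> real) \<Rightarrow> nat \<Rightarrow> (real^'n) set" where
  "Gp p m = {g \<in> quantize m ` unit_cube. Pq p m g > 0}"

lemma sets_dens[simp, measurable_cong]: "sets (dens p) = sets borel"
  by (simp add: dens_def)

lemma space_dens[simp]: "space (dens p) = UNIV"
  by (simp add: dens_def)

lemma closed_unit_cube: "closed (unit_cube :: (real^'n) set)"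
  unfolding unit_cube_def
  by (intro closed_Collect_all closed_Collect_conj closed_Collect_le continuous_intros)

lemma unit_cube_sets[measurable]: "(unit_cube :: (real^'n) set) \<in> sets borel"
  by (intro borel_closed closed_unit_cube)

lemma Pq_nonneg: "Pq p m g \<ge> 0"
  unfolding Pq_def by (rule measure_nonneg)

lemma finite_Gp: "finite (Gp p m)"
  unfolding Gp_def by (rule finite_subset[OF _ finite_quantize_cube]) auto

context
  fixes p :: "real^'n \<Rightarrow> real" and L :: real and m :: nat
  assumes m: "m > 0" and L: "L > 0" and p_nonneg: "\<And>v. p v \<ge> 0"
    and p_lip: "\<And>v w. \<bar>p v - p w\<bar> \<le> L * (\<Sum>i\<in>UNIV. \<bar>v $ i - w $ i\<bar>)"
    and p_meas[measurable]: "p \<in> borel_measurable borel"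
    and prob: "prob_space (dens p)"
    and cube1: "measure (dens p) unit_cube = 1"
begin

interpretation Q: prob_space "dens p" by (rule prob)

lemma measure_Union_bins:
  assumes "S \<subseteq> quantize m ` unit_cube"
  shows "measure (dens p) (\<Union>g\<in>S. bin m g) = (\<Sum>g\<in>S. Pq p m g)"
proof -
  have fin: "finite S" using assms finite_quantize_cube finite_subset by blast
  have disj: "disjoint_family_on (bin m) S" by (auto simp: disjoint_family_on_def bin_def)
  show ?thesis unfolding Pq_def
    by (rule Q.finite_measure_finite_Union[OF fin _ disj]) auto
qed

lemma sum_Pq_cube: "(\<Sum>g\<in>quantize m ` unit_cube. Pq p m g) = 1"
proof -
  let ?S = "quantize m ` (unit_cube :: (real^'n) set)"
  have fin: "finite ?S" by (rule finite_quantize_cube)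
  have sub: "unit_cube \<subseteq> (\<Union>g\<in>?S. bin m g)" by (auto simp: bin_def)
  have meas: "(\<Union>g\<in>?S. bin m g) \<in> sets borel" by (rule sets.finite_UN[OF fin]) simp
  have "1 = measure (dens p) unit_cube" using cube1 by simp
  also have "\<dots> \<le> measure (dens p) (\<Union>g\<in>?S. bin m g)"
    by (intro Q.finite_measure_mono sub) (simp only: sets_dens meas)
  finally have a: "1 \<le> measure (dens p) (\<Union>g\<in>?S. bin m g)" .
  have b: "measure (dens p) (\<Union>g\<in>?S. bin m g) \<le> 1" by (rule Q.prob_le_1)
  have U: "measure (dens p) (\<Union>g\<in>?S. bin m g) = (\<Sum>g\<in>?S. Pq p m g)"
    by (rule measure_Union_bins) simp
  show ?thesis using a b U by linarith
qed

lemma sum_Pq_Gp: "(\<Sum>g\<in>Gp p m. Pq p m g) = 1"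
proof -
  have "(\<Sum>g\<in>Gp p m. Pq p m g) = (\<Sum>g\<in>quantize m ` unit_cube. Pq p m g)"
  proof (rule sum.mono_neutral_left)
    show "finite (quantize m ` (unit_cube :: (real^'n) set))" by (rule finite_quantize_cube)
    show "Gp p m \<subseteq> quantize m ` unit_cube" by (auto simp: Gp_def)
    show "\<forall>g\<in>quantize m ` unit_cube - Gp p m. Pq p m g = 0"
    proof
      fix g assume "g \<in> quantize m ` unit_cube - Gp p m"
      then have "\<not> Pq p m g > 0" by (auto simp: Gp_def)
      then show "Pq p m g = 0" using Pq_nonneg[of p m g] by linarith
    qed
  qed
  then show ?thesis using sum_Pq_cube by simp
qed

lemma measure_Gp: "measure (dens p) (quantize m -` Gp p m) = 1"
proof -
  have "quantize m -` Gp p m = (\<Union>g\<in>Gp p m. bin m g)" by (auto simp: bin_def)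
  then show ?thesis using measure_Union_bins[of "Gp p m"] sum_Pq_Gp by (simp add: Gp_def)
qed

lemma emeasure_dens_null:
  assumes "A \<in> null_sets lborel"
  shows "emeasure (dens p) A = 0"
proof -
  have A: "A \<in> sets borel" using assms by (auto simp: null_sets_def)
  have "emeasure (dens p) A = (\<integral>\<^sup>+ x. ennreal (p x) * indicator A x \<partial>lborel)"
    unfolding dens_def by (rule emeasure_density) (use A in auto)
  also have "\<dots> = 0" by (rule nn_integral_null_set[OF assms])
  finally show ?thesis .
qed

lemma Gp_subset:
  "Gp p m \<subseteq> (\<lambda>k. (\<chi> i. real_of_int (k i) / real m)) ` (\<Pi>\<^sub>E i\<in>UNIV. {0..<int m})"
proof
  fix g assume g: "g \<in> Gp p m"
  then obtain v where v: "v \<in> unit_cube" "g = quantize m v" and pos: "Pq p m g > 0"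
    by (auto simp: Gp_def)
  define k where "k = (\<lambda>i. \<lfloor>real m * v $ i\<rfloor>)"
  have k0: "0 \<le> k i" "k i \<le> int m" for i
  proof -
    have "0 \<le> v $ i" "v $ i \<le> 1" using v(1) by (auto simp: unit_cube_def)
    then have "0 \<le> real m * v $ i" "real m * v $ i \<le> real m"
      by (auto intro: mult_left_le)
    then show "0 \<le> k i" "k i \<le> int m" unfolding k_def by (auto simp: le_floor_iff floor_le_iff)
  qed
  have klt: "k j < int m" for j
  proof (rule ccontr)
    assume "\<not> k j < int m"
    then have kj: "k j = int m" using k0[of j] by simp
    define a :: "real^'n" where "a = (\<chi> i. if i = j then 1 else 0)"
    define b :: "real^'n" where "b = (\<chi> i. 1)"
    have subA: "bin m g \<inter> unit_cube \<subseteq> cbox a b"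
    proof
      fix w assume w: "w \<in> bin m g \<inter> unit_cube"
      then have w01: "0 \<le> w $ i" "w $ i \<le> 1" for i by (auto simp: unit_cube_def)
      have "\<lfloor>real m * w $ j\<rfloor> = k j"
        using w unfolding bin_def v(2) k_def using quantize_eq_iff[OF m, of w v] by auto
      then have "int m \<le> \<lfloor>real m * w $ j\<rfloor>" using kj by simp
      then have "real m \<le> real m * w $ j" by (simp add: le_floor_iff)
      then have "1 \<le> w $ j" using m by simp
      then have "w $ j = 1" using w01[of j] by simp
      then show "w \<in> cbox a b" using w01 by (auto simp: mem_box_cart a_def b_def)
    qed
    have "measure lborel (cbox a b) = 0"
    proof (cases "cbox a b = {}")
      case True then show ?thesis by simp
    next
      case False
      then have "measure lborel (cbox a b) = (\<Prod>i\<in>UNIV. b$i - a$i)" by (rule content_cbox_cart)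
      also have "\<dots> = 0" by (subst prod_zero_iff) (auto simp: a_def b_def)
      finally show ?thesis .
    qed
    then have "emeasure lborel (cbox a b) = 0"
      using emeasure_lborel_cbox_finite[of a b] by (simp add: emeasure_eq_ennreal_measure)
    then have "cbox a b \<in> null_sets lborel" by (auto simp: null_sets_def)
    then have "bin m g \<inter> unit_cube \<in> null_sets lborel"
      by (rule null_sets_subset[OF _ _ subA]) auto
    then have z1: "measure (dens p) (bin m g \<inter> unit_cube) = 0"
      using emeasure_dens_null by (simp add: measure_def)
    have z2: "measure (dens p) (UNIV - unit_cube) = 0"
      using Q.prob_compl[of unit_cube] cube1 by simp
    have "Pq p m g \<le> measure (dens p) ((bin m g \<inter> unit_cube) \<union> (UNIV - unit_cube))"
      unfolding Pq_def by (intro Q.finite_measure_mono) auto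
    also have "\<dots> \<le> measure (dens p) (bin m g \<inter> unit_cube) + measure (dens p) (UNIV - unit_cube)"
      by (intro measure_Un_le) auto
    finally show False using z1 z2 pos by simp
  qed
  have "k \<in> (\<Pi>\<^sub>E i\<in>UNIV. {0..<int m})" using k0 klt by auto
  moreover have "g = (\<chi> i. real_of_int (k i) / real m)" unfolding v(2) k_def quantize_def by simp
  ultimately show "g \<in> (\<lambda>k. (\<chi> i. real_of_int (k i) / real m)) ` (\<Pi>\<^sub>E i\<in>UNIV. {0..<int m})" by blast
qed

lemma p_lborel_meas[measurable]: "p \<in> borel_measurable lborel"
  using p_meas by simp

lemma p_integrable: "integrable lborel p"
proof (rule integrableI_nonneg)
  show "p \<in> borel_measurable lborel" by simp
  show "AE x in lborel. 0 \<le> p x" using p_nonneg by simp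
  have "emeasure (dens p) UNIV = (\<integral>\<^sup>+ x. ennreal (p x) * indicator UNIV x \<partial>lborel)"
    unfolding dens_def by (rule emeasure_density) auto
  also have "\<dots> = (\<integral>\<^sup>+ x. ennreal (p x) \<partial>lborel)" by simp
  finally have "(\<integral>\<^sup>+ x. ennreal (p x) \<partial>lborel) = emeasure (dens p) (space (dens p))" by simp
  also have "\<dots> = 1" by (rule Q.emeasure_space_1)
  finally show "(\<integral>\<^sup>+ x. ennreal (p x) \<partial>lborel) < \<infinity>" by simp
qed

lemma Pq_integral: "Pq p m g = (\<integral>v. p v * indicator (bin m g) v \<partial>lborel)"
proof -
  have int: "integrable lborel (\<lambda>v. p v * indicator (bin m g) v)"
    by (rule integrable_real_mult_indicator) (auto intro: p_integrable)
  have "emeasure (dens p) (bin m g) = (\<integral>\<^sup>+ x. ennreal (p x) * indicator (bin m g) x \<partial>lborel)"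
    unfolding dens_def by (rule emeasure_density) auto
  also have "\<dots> = (\<integral>\<^sup>+ x. ennreal (p x * indicator (bin m g) x) \<partial>lborel)"
    by (intro nn_integral_cong) (auto simp: indicator_def)
  also have "\<dots> = ennreal (\<integral>v. p v * indicator (bin m g) v \<partial>lborel)"
    by (rule nn_integral_eq_integral[OF int]) (auto intro!: AE_I2 simp: p_nonneg)
  finally have "emeasure (dens p) (bin m g) = ennreal (\<integral>v. p v * indicator (bin m g) v \<partial>lborel)" .
  moreover have "0 \<le> (\<integral>v. p v * indicator (bin m g) v \<partial>lborel)"
    by (intro integral_nonneg_AE AE_I2) (auto simp: p_nonneg)
  ultimately show ?thesis unfolding Pq_def measure_def by simp
qed

lemma bin_close:
  assumes "v \<in> bin m g" "z \<in> bin m g"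
  shows "p v \<le> p z + L * real CARD('n) / real m"
proof -
  have qe: "quantize m v = quantize m z" using assms by (simp add: bin_def)
  have fl: "\<lfloor>real m * v $ i\<rfloor> = \<lfloor>real m * z $ i\<rfloor>" for i
    using quantize_eq_iff[OF m, of v z] qe by blast
  have close: "\<bar>v $ i - z $ i\<bar> \<le> 1 / real m" for i
  proof -
    have a: "of_int \<lfloor>real m * v $ i\<rfloor> \<le> real m * v $ i" "real m * v $ i < of_int \<lfloor>real m * v $ i\<rfloor> + 1"
      using floor_correct[of "real m * v $ i"] by auto
    have b: "of_int \<lfloor>real m * z $ i\<rfloor> \<le> real m * z $ i" "real m * z $ i < of_int \<lfloor>real m * z $ i\<rfloor> + 1"
      using floor_correct[of "real m * z $ i"] by auto
    have "\<bar>real m * v $ i - real m * z $ i\<bar> \<le> 1" using a b fl[of i] by linarith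
    then have "real m * \<bar>v $ i - z $ i\<bar> \<le> 1" using m by (simp add: abs_mult right_diff_distrib[symmetric])
    then show ?thesis using m by (simp add: field_simps)
  qed
  have "(\<Sum>i\<in>UNIV. \<bar>v $ i - z $ i\<bar>) \<le> of_nat (card (UNIV::'n set)) * (1 / real m)"
    by (rule sum_bounded_above) (rule close)
  then have "L * (\<Sum>i\<in>UNIV. \<bar>v $ i - z $ i\<bar>) \<le> L * (real CARD('n) * (1 / real m))"
    using L by (intro mult_left_mono) auto
  moreover have "p v - p z \<le> L * (\<Sum>i\<in>UNIV. \<bar>v $ i - z $ i\<bar>)" using p_lip[of v z] by simp
  ultimately show ?thesis by simp
qed

lemma abs_xlnx_le: "(t::real) \<ge> 0 \<Longrightarrow> \<bar>t * ln t\<bar> \<le> t\<^sup>2 + 1"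
proof -
  assume t: "t \<ge> 0"
  show ?thesis
  proof (cases "t = 0")
    case True then show ?thesis by simp
  next
    case False
    then have tp: "t > 0" using t by simp
    show ?thesis
    proof (cases "t \<le> 1")
      case True
      have l: "ln t \<le> 0" using True tp by simp
      have "ln (1 / t) \<le> 1 / t - 1" using tp by (intro ln_le_minus_one) auto
      then have "- ln t \<le> 1 / t - 1" using tp by (simp add: ln_div)
      then have "t * (- ln t) \<le> t * (1 / t - 1)" using tp by (intro mult_left_mono) auto
      moreover have "t * (1 / t - 1) = 1 - t" using tp by (simp add: field_simps)
      ultimately have a: "- (t * ln t) \<le> 1 - t" by simp
      have b: "t * ln t \<le> 0" using l tp by (simp add: mult_nonneg_nonpos)
      have c: "0 \<le> t\<^sup>2" by simp
      have "\<bar>t * ln t\<bar> = - (t * ln t)" using b by simp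
      then show ?thesis using a c tp by linarith
    next
      case False
      have l: "0 \<le> ln t" using False by simp
      have "ln t \<le> t - 1" using tp by (rule ln_le_minus_one)
      then have "t * ln t \<le> t * (t - 1)" using tp by (intro mult_left_mono) auto
      moreover have "t * (t - 1) = t\<^sup>2 - t" by (simp add: power2_eq_square algebra_simps)
      ultimately have "t * ln t \<le> t\<^sup>2" using tp by linarith
      moreover have "0 \<le> t * ln t" using l tp by simp
      ultimately show ?thesis by simp
    qed
  qed
qed

lemma per_bin:
  assumes g: "g \<in> Gp p m"
  defines "V \<equiv> (1 / real m) ^ CARD('n)"
  defines "w \<equiv> L * real CARD('n) / real m"
  shows "integrable lborel (\<lambda>v. (p v * ln (p v)) * indicator (bin m g) v)"
    "0 \<le> (\<integral>v. (p v * ln (p v)) * indicator (bin m g) v \<partial>lborel) - Pq p m g * ln (Pq p m g / V)"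
    "(\<integral>v. (p v * ln (p v)) * indicator (bin m g) v \<partial>lborel) - Pq p m g * ln (Pq p m g / V) \<le> w * V"
proof -
  obtain v0 where v0: "g = quantize m v0" using g by (auto simp: Gp_def)
  define B where "B = bin m g"
  define P where "P = Pq p m g"
  define \<mu> where "\<mu> = P / V"
  have Bs[measurable]: "B \<in> sets borel" by (simp add: B_def)
  have VB: "measure lborel B = V" unfolding B_def v0 V_def by (rule bin_measure(2)[OF m])
  have VBe: "emeasure lborel B = ennreal V" unfolding B_def v0 V_def by (rule bin_measure(1)[OF m])
  have Vp: "V > 0" using m by (simp add: V_def)
  have Pp: "P > 0" using g by (simp add: P_def Gp_def)
  have mup: "\<mu> > 0" using Vp Pp by (simp add: \<mu>_def)
  have w0: "w \<ge> 0" using L by (simp add: w_def)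
  have intB: "integrable lborel (indicator B :: _ \<Rightarrow> real)"
    using VBe by (simp add: integrable_indicator_iff)
  have intpB: "integrable lborel (\<lambda>v. p v * indicator B v)"
    using integrable_real_mult_indicator[of B lborel p] p_integrable by simp
  have PB: "P = (\<integral>v. p v * indicator B v \<partial>lborel)" unfolding P_def B_def by (rule Pq_integral)
  have intc: "integrable lborel (\<lambda>v. c * indicator B v)" for c :: real
    using intB by simp
  have intc_val: "(\<integral>v. c * indicator B v \<partial>lborel) = c * V" for c :: real
    using VB by simp
  have bnd: "p v \<le> \<mu> + w" if v: "v \<in> B" for v
  proof -
    have "(\<integral>z. p v * indicator B z \<partial>lborel) \<le> (\<integral>z. (p z + w) * indicator B z \<partial>lborel)"
    proof (rule integral_mono)
      show "integrable lborel (\<lambda>z. p v * indicator B z)" by (rule intc)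
      show "integrable lborel (\<lambda>z. (p z + w) * indicator B z)"
        using intpB intc[of w] by (simp add: distrib_right)
      fix z :: "real^'n" assume "z \<in> space lborel"
      show "p v * indicator B z \<le> (p z + w) * indicator B z"
        using bin_close[of v g z] v unfolding B_def w_def by (auto simp: indicator_def)
    qed
    also have "(\<integral>z. (p z + w) * indicator B z \<partial>lborel) = P + w * V"
      using intpB intc[of w] by (simp add: distrib_right PB intc_val VB)
    finally have "p v * V \<le> P + w * V" by (simp add: intc_val VB)
    then have "p v \<le> (P + w * V) / V" using Vp by (simp add: field_simps)
    also have "\<dots> = \<mu> + w" using Vp by (simp add: \<mu>_def field_simps)
    finally show ?thesis .
  qed
  show int1: "integrable lborel (\<lambda>v. (p v * ln (p v)) * indicator (bin m g) v)"
    unfolding B_def[symmetric]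
  proof (rule Bochner_Integration.integrable_bound[OF intc[of "(\<mu> + w)\<^sup>2 + 1"]])
    show "(\<lambda>v. (p v * ln (p v)) * indicator B v) \<in> borel_measurable lborel" by measurable
    show "AE v in lborel. norm ((p v * ln (p v)) * indicator B v) \<le> norm (((\<mu> + w)\<^sup>2 + 1) * indicator B v)"
    proof (rule AE_I2)
      fix v :: "real^'n"
      show "norm ((p v * ln (p v)) * indicator B v) \<le> norm (((\<mu> + w)\<^sup>2 + 1) * indicator B v)"
      proof (cases "v \<in> B")
        case True
        have "\<bar>p v * ln (p v)\<bar> \<le> (p v)\<^sup>2 + 1" by (rule abs_xlnx_le[OF p_nonneg])
        also have "(p v)\<^sup>2 \<le> (\<mu> + w)\<^sup>2" using bnd[OF True] p_nonneg[of v] by (intro power_mono) auto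
        finally show ?thesis using True by simp
      qed simp
    qed
  qed
  have int1': "integrable lborel (\<lambda>v. (p v * ln (p v)) * indicator B v)" using int1 by (simp add: B_def)
  define J where "J = (\<integral>v. (p v * ln (p v)) * indicator B v \<partial>lborel)"
  have diff_int: "(\<integral>v. (p v * ln (p v) - p v * ln \<mu>) * indicator B v \<partial>lborel) = J - P * ln \<mu>"
  proof -
    have "(\<lambda>v. (p v * ln (p v) - p v * ln \<mu>) * indicator B v) = (\<lambda>v. (p v * ln (p v)) * indicator B v - ln \<mu> * (p v * indicator B v))"
      by (auto simp: fun_eq_iff algebra_simps)
    then show ?thesis using int1' intpB by (simp add: J_def PB)
  qed
  have int_diff: "integrable lborel (\<lambda>v. (p v * ln (p v) - p v * ln \<mu>) * indicator B v)"
  proof -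
    have "(\<lambda>v. (p v * ln (p v) - p v * ln \<mu>) * indicator B v) = (\<lambda>v. (p v * ln (p v)) * indicator B v - ln \<mu> * (p v * indicator B v))"
      by (auto simp: fun_eq_iff algebra_simps)
    then show ?thesis using int1' intpB by simp
  qed
  have "(\<integral>v. (p v - \<mu>) * indicator B v \<partial>lborel) \<le> (\<integral>v. (p v * ln (p v) - p v * ln \<mu>) * indicator B v \<partial>lborel)"
  proof (rule integral_mono[OF _ int_diff])
    show "integrable lborel (\<lambda>v. (p v - \<mu>) * indicator B v)"
    proof -
      have "(\<lambda>v. (p v - \<mu>) * indicator B v) = (\<lambda>v. p v * indicator B v - \<mu> * indicator B v)"
        by (auto simp: fun_eq_iff algebra_simps)
      then show ?thesis using intpB intc[of \<mu>] by simp
    qed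
    fix v :: "real^'n" assume "v \<in> space lborel"
    have "p v - \<mu> \<le> p v * ln (p v) - p v * ln \<mu>"
    proof (cases "p v = 0")
      case True then show ?thesis using mup by simp
    next
      case False
      then have pv: "p v > 0" using p_nonneg[of v] by simp
      have "ln (\<mu> / p v) \<le> \<mu> / p v - 1" using pv mup by (intro ln_le_minus_one) auto
      then have "ln \<mu> - ln (p v) \<le> \<mu> / p v - 1" using pv mup by (simp add: ln_div)
      then have "p v * (ln \<mu> - ln (p v)) \<le> p v * (\<mu> / p v - 1)" using pv by (intro mult_left_mono) auto
      moreover have "p v * (\<mu> / p v - 1) = \<mu> - p v" using pv by (simp add: field_simps)
      moreover have "p v * (ln \<mu> - ln (p v)) = p v * ln \<mu> - p v * ln (p v)" by (simp add: algebra_simps)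
      ultimately show ?thesis by linarith
    qed
    then show "(p v - \<mu>) * indicator B v \<le> (p v * ln (p v) - p v * ln \<mu>) * indicator B v"
      by (auto simp: indicator_def)
  qed
  moreover have "(\<integral>v. (p v - \<mu>) * indicator B v \<partial>lborel) = 0"
  proof -
    have "(\<lambda>v. (p v - \<mu>) * indicator B v) = (\<lambda>v. p v * indicator B v - \<mu> * indicator B v)"
      by (auto simp: fun_eq_iff algebra_simps)
    then have "(\<integral>v. (p v - \<mu>) * indicator B v \<partial>lborel) = P - \<mu> * V"
      using intpB intc[of \<mu>] by (simp add: PB intc_val VB)
    also have "\<dots> = 0" using Vp by (simp add: \<mu>_def)
    finally show ?thesis .
  qed
  ultimately have lo: "0 \<le> J - P * ln \<mu>" using diff_int by simp
  have "(\<integral>v. (p v * ln (p v) - p v * ln \<mu>) * indicator B v \<partial>lborel) \<le> (\<integral>v. (w / \<mu>) * (p v * indicator B v) \<partial>lborel)"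
  proof (rule integral_mono[OF int_diff])
    show "integrable lborel (\<lambda>v. (w / \<mu>) * (p v * indicator B v))" using intpB by simp
    fix v :: "real^'n" assume "v \<in> space lborel"
    show "(p v * ln (p v) - p v * ln \<mu>) * indicator B v \<le> (w / \<mu>) * (p v * indicator B v)"
    proof (cases "v \<in> B")
      case True
      have "p v * ln (p v) - p v * ln \<mu> \<le> (w / \<mu>) * p v"
      proof (cases "p v = 0")
        case True then show ?thesis by simp
      next
        case False
        then have pv: "p v > 0" using p_nonneg[of v] by simp
        have "ln (p v / \<mu>) \<le> p v / \<mu> - 1" using pv mup by (intro ln_le_minus_one) auto
        also have "\<dots> \<le> (\<mu> + w) / \<mu> - 1" using bnd[OF True] mup by (simp add: divide_right_mono)
        also have "\<dots> = w / \<mu>" using mup by (simp add: field_simps)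
        finally have "ln (p v) - ln \<mu> \<le> w / \<mu>" using pv mup by (simp add: ln_div)
        then have "p v * (ln (p v) - ln \<mu>) \<le> p v * (w / \<mu>)" using pv by (intro mult_left_mono) auto
        then show ?thesis by (simp add: algebra_simps)
      qed
      then show ?thesis using True by simp
    qed simp
  qed
  moreover have "(\<integral>v. (w / \<mu>) * (p v * indicator B v) \<partial>lborel) = w * V"
    using Vp Pp by (simp add: PB[symmetric] \<mu>_def)
  ultimately have up: "J - P * ln \<mu> \<le> w * V" using diff_int by simp
  show "0 \<le> (\<integral>v. (p v * ln (p v)) * indicator (bin m g) v \<partial>lborel) - Pq p m g * ln (Pq p m g / V)"
    using lo by (simp add: J_def B_def P_def \<mu>_def)
  show "(\<integral>v. (p v * ln (p v)) * indicator (bin m g) v \<partial>lborel) - Pq p m g * ln (Pq p m g / V) \<le> w * V"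
    using up by (simp add: J_def B_def P_def \<mu>_def)
qed

lemma card_Gp: "card (Gp p m) \<le> m ^ CARD('n)"
proof -
  have "card (Gp p m) \<le> card ((\<lambda>k. (\<chi> i. real_of_int (k i) / real m)) ` (\<Pi>\<^sub>E i\<in>(UNIV::'n set). {0..<int m}))"
    by (intro card_mono Gp_subset finite_imageI finite_PiE) auto
  also have "\<dots> \<le> card (\<Pi>\<^sub>E i\<in>(UNIV::'n set). {0..<int m})" by (rule card_image_le) (intro finite_PiE; simp)
  also have "\<dots> = m ^ CARD('n)" by (simp add: card_PiE)
  finally show ?thesis .
qed


lemma Gp_preimage_sets[measurable]: "quantize m -` Gp p m \<in> sets borel"
proof -
  have "Gp p m \<in> sets borel" by (intro borel_closed finite_imp_closed finite_Gp)
  then have "quantize m -` Gp p m \<inter> space borel \<in> sets borel"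
    by (intro measurable_sets[OF quantize_measurable])
  then show ?thesis by simp
qed

lemma AE_outside: "AE v in lborel. quantize m v \<notin> Gp p m \<longrightarrow> p v = 0"
proof -
  define A where "A = UNIV - quantize m -` Gp p m"
  have As[measurable]: "A \<in> sets borel" unfolding A_def by (intro sets.compl_sets[of _ borel, simplified]) simp
  have "measure (dens p) A = 1 - measure (dens p) (quantize m -` Gp p m)"
    unfolding A_def using Q.prob_compl[of "quantize m -` Gp p m"] by simp
  then have "measure (dens p) A = 0" using measure_Gp by simp
  then have "emeasure (dens p) A = 0" by (simp add: Q.emeasure_eq_measure)
  moreover have "emeasure (dens p) A = (\<integral>\<^sup>+ x. ennreal (p x) * indicator A x \<partial>lborel)"
    unfolding dens_def by (rule emeasure_density) auto
  ultimately have "(\<integral>\<^sup>+ x. ennreal (p x) * indicator A x \<partial>lborel) = 0" by simp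
  then have "AE x in lborel. ennreal (p x) * indicator A x = 0"
    by (subst (asm) nn_integral_0_iff_AE) auto
  then show ?thesis
  proof (rule eventually_mono)
    fix v assume "ennreal (p v) * indicator A v = 0"
    then show "quantize m v \<notin> Gp p m \<longrightarrow> p v = 0"
      using p_nonneg[of v] by (auto simp: A_def indicator_def)
  qed
qed

lemma det_bound:
  defines "H \<equiv> - (\<Sum>g\<in>Gp p m. Pq p m g * ln (Pq p m g))"
  shows "0 \<le> H - real CARD('n) * ln (real m) - diff_entropy p"
        "H - real CARD('n) * ln (real m) - diff_entropy p \<le> L * real CARD('n) / real m"
proof -
  define V where "V = (1 / real m) ^ CARD('n)"
  define w where "w = L * real CARD('n) / real m"
  define J where "J g = (\<integral>v. (p v * ln (p v)) * indicator (bin m g) v \<partial>lborel)" for g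
  have int: "integrable lborel (\<lambda>v. (p v * ln (p v)) * indicator (bin m g) v)" if "g \<in> Gp p m" for g
    using per_bin(1)[OF that] .
  have "(\<integral>v. p v * ln (p v) \<partial>lborel) = (\<integral>v. (\<Sum>g\<in>Gp p m. (p v * ln (p v)) * indicator (bin m g) v) \<partial>lborel)"
  proof (rule integral_cong_AE)
    show "(\<lambda>v. p v * ln (p v)) \<in> borel_measurable lborel" by measurable
    show "(\<lambda>v. \<Sum>g\<in>Gp p m. (p v * ln (p v)) * indicator (bin m g) v) \<in> borel_measurable lborel" by measurable
    show "AE v in lborel. p v * ln (p v) = (\<Sum>g\<in>Gp p m. (p v * ln (p v)) * indicator (bin m g) v)"
      using AE_outside
    proof (rule eventually_mono)
      fix v assume h: "quantize m v \<notin> Gp p m \<longrightarrow> p v = 0"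
      have "(\<Sum>g\<in>Gp p m. (p v * ln (p v)) * indicator (bin m g) v)
          = (\<Sum>g\<in>Gp p m. if quantize m v = g then p v * ln (p v) else 0)"
        by (intro sum.cong) (auto simp: indicator_def bin_def)
      also have "\<dots> = (if quantize m v \<in> Gp p m then p v * ln (p v) else 0)"
        by (rule sum.delta'[OF finite_Gp])
      finally show "p v * ln (p v) = (\<Sum>g\<in>Gp p m. (p v * ln (p v)) * indicator (bin m g) v)"
        using h by auto
    qed
  qed
  also have "\<dots> = (\<Sum>g\<in>Gp p m. J g)"
    unfolding J_def by (rule Bochner_Integration.integral_sum) (rule int)
  finally have h: "diff_entropy p = - (\<Sum>g\<in>Gp p m. J g)" by (simp add: diff_entropy_def)
  have Vp: "V > 0" using m by (simp add: V_def)
  have lnV: "ln V = - real CARD('n) * ln (real m)"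
    using m by (simp add: V_def ln_realpow ln_div)
  have lnmu: "ln (Pq p m g / V) = ln (Pq p m g) + real CARD('n) * ln (real m)" if "g \<in> Gp p m" for g
  proof -
    have "Pq p m g > 0" using that by (simp add: Gp_def)
    then show ?thesis using Vp lnV by (simp add: ln_div)
  qed
  have "(\<Sum>g\<in>Gp p m. J g - Pq p m g * ln (Pq p m g / V))
      = (\<Sum>g\<in>Gp p m. J g - Pq p m g * ln (Pq p m g) - Pq p m g * (real CARD('n) * ln (real m)))"
    by (intro sum.cong) (simp_all add: lnmu algebra_simps)
  also have "\<dots> = (\<Sum>g\<in>Gp p m. J g) - (\<Sum>g\<in>Gp p m. Pq p m g * ln (Pq p m g))
      - (\<Sum>g\<in>Gp p m. Pq p m g) * (real CARD('n) * ln (real m))"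
    by (simp add: sum_subtractf sum_distrib_right)
  also have "\<dots> = H - real CARD('n) * ln (real m) - diff_entropy p"
    using sum_Pq_Gp h by (simp add: H_def)
  finally have eq: "H - real CARD('n) * ln (real m) - diff_entropy p = (\<Sum>g\<in>Gp p m. J g - Pq p m g * ln (Pq p m g / V))"
    by simp
  show "0 \<le> H - real CARD('n) * ln (real m) - diff_entropy p"
    unfolding eq by (intro sum_nonneg) (use per_bin(2) in \<open>simp add: J_def V_def\<close>)
  have "(\<Sum>g\<in>Gp p m. J g - Pq p m g * ln (Pq p m g / V)) \<le> (\<Sum>g\<in>Gp p m. w * V)"
    by (intro sum_mono) (use per_bin(3) in \<open>simp add: J_def V_def w_def\<close>)
  also have "\<dots> = real (card (Gp p m)) * (w * V)" by simp
  also have "\<dots> \<le> real (m ^ CARD('n)) * (w * V)"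
    using card_Gp L Vp by (intro mult_right_mono) (auto simp: w_def)
  also have "\<dots> = w" using m by (simp add: V_def power_one_over)
  finally show "H - real CARD('n) * ln (real m) - diff_entropy p \<le> L * real CARD('n) / real m"
    unfolding eq w_def .
qed

end


definition cnt :: "nat \<Rightarrow> (nat \<Rightarrow> 'b) \<Rightarrow> nat \<Rightarrow> nat" where
  "cnt N \<phi> u = card {v\<in>{..<N}. \<phi> v = \<phi> u}"

definition Hemp :: "nat \<Rightarrow> (nat \<Rightarrow> 'b) \<Rightarrow> real" where
  "Hemp N \<phi> = - (\<Sum>u<N. ln (real (cnt N \<phi> u) / real N)) / real N"

lemma cnt_bounds: assumes "u < N" shows "1 \<le> cnt N \<phi> u" "cnt N \<phi> u \<le> N"
proof -
  have "u \<in> {v\<in>{..<N}. \<phi> v = \<phi> u}" using assms by simp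
  then have "{v\<in>{..<N}. \<phi> v = \<phi> u} \<noteq> {}" by blast
  moreover have "finite {v\<in>{..<N}. \<phi> v = \<phi> u}" by simp
  ultimately have "card {v\<in>{..<N}. \<phi> v = \<phi> u} > 0" by (simp add: card_gt_0_iff)
  then show "1 \<le> cnt N \<phi> u" unfolding cnt_def by simp
  have "cnt N \<phi> u \<le> card {..<N}" unfolding cnt_def by (intro card_mono) auto
  then show "cnt N \<phi> u \<le> N" by simp
qed

lemma entropy_empirical:
  assumes N: "N \<ge> 1"
  shows "shannon_entropy (map_pmf \<phi> (pmf_of_set {..<N})) = Hemp N \<phi>"
proof -
  let ?S = "{..<N}"
  let ?Y = "map_pmf \<phi> (pmf_of_set ?S)"
  have ne: "?S \<noteq> {}" using N by (simp add: lessThan_empty_iff)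
  have set: "set_pmf ?Y = \<phi> ` ?S" using ne by simp
  have pmfY: "pmf ?Y y = real (card {u\<in>?S. \<phi> u = y}) / real N" for y
  proof -
    have "pmf ?Y y = measure (pmf_of_set ?S) (\<phi> -` {y})" by (rule pmf_map)
    also have "\<dots> = real (card (?S \<inter> \<phi> -` {y})) / real (card ?S)"
      using ne by (simp add: measure_pmf_of_set)
    also have "?S \<inter> \<phi> -` {y} = {u\<in>?S. \<phi> u = y}" by auto
    finally show ?thesis by simp
  qed
  have "(\<Sum>u\<in>?S. ln (real (cnt N \<phi> u) / real N) / real N)
      = (\<Sum>y\<in>\<phi> ` ?S. \<Sum>u\<in>{u\<in>?S. \<phi> u = y}. ln (real (cnt N \<phi> u) / real N) / real N)"
    by (rule sum.image_gen) simp
  also have "\<dots> = (\<Sum>y\<in>\<phi> ` ?S. pmf ?Y y * ln (pmf ?Y y))"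
  proof (rule sum.cong[OF refl])
    fix y assume "y \<in> \<phi> ` ?S"
    have "(\<Sum>u\<in>{u\<in>?S. \<phi> u = y}. ln (real (cnt N \<phi> u) / real N) / real N)
        = (\<Sum>u\<in>{u\<in>?S. \<phi> u = y}. ln (real (card {u\<in>?S. \<phi> u = y}) / real N) / real N)"
      by (rule sum.cong[OF refl]) (auto simp: cnt_def)
    also have "\<dots> = pmf ?Y y * ln (pmf ?Y y)" by (simp add: pmfY)
    finally show "(\<Sum>u\<in>{u\<in>?S. \<phi> u = y}. ln (real (cnt N \<phi> u) / real N) / real N) = pmf ?Y y * ln (pmf ?Y y)" .
  qed
  finally have eq: "(\<Sum>y\<in>\<phi> ` ?S. pmf ?Y y * ln (pmf ?Y y)) = (\<Sum>u\<in>?S. ln (real (cnt N \<phi> u) / real N)) / real N"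
    by (simp add: sum_divide_distrib)
  show ?thesis unfolding shannon_entropy_def Hemp_def set eq by simp
qed

lemma Hemp_alt:
  assumes N: "N \<ge> 1"
  shows "Hemp N \<phi> = ln (real N) - (\<Sum>u<N. ln (real (cnt N \<phi> u))) / real N"
proof -
  have "(\<Sum>u<N. ln (real (cnt N \<phi> u) / real N)) = (\<Sum>u<N. ln (real (cnt N \<phi> u)) - ln (real N))"
  proof (rule sum.cong[OF refl])
    fix u assume "u \<in> {..<N}"
    then have "1 \<le> cnt N \<phi> u" using cnt_bounds(1)[of u N \<phi>] by simp
    then show "ln (real (cnt N \<phi> u) / real N) = ln (real (cnt N \<phi> u)) - ln (real N)"
      using N by (subst ln_div) auto
  qed
  also have "\<dots> = (\<Sum>u<N. ln (real (cnt N \<phi> u))) - real N * ln (real N)"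
    by (simp add: sum_subtractf)
  finally show ?thesis unfolding Hemp_def using N by (simp add: field_simps)
qed

lemma Hemp_bounds:
  assumes N: "N \<ge> 1"
  shows "0 \<le> Hemp N \<phi>" "Hemp N \<phi> \<le> ln (real N)"
proof -
  have a: "0 \<le> (\<Sum>u<N. ln (real (cnt N \<phi> u)))"
  proof (intro sum_nonneg)
    fix u assume "u \<in> {..<N}"
    then have "1 \<le> cnt N \<phi> u" using cnt_bounds(1)[of u N \<phi>] by simp
    then show "0 \<le> ln (real (cnt N \<phi> u))" by simp
  qed
  have "(\<Sum>u<N. ln (real (cnt N \<phi> u))) \<le> (\<Sum>u<N. ln (real N))"
  proof (intro sum_mono)
    fix u assume "u \<in> {..<N}"
    then have "1 \<le> cnt N \<phi> u" "cnt N \<phi> u \<le> N" using cnt_bounds[of u N \<phi>] by simp_all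
    then show "ln (real (cnt N \<phi> u)) \<le> ln (real N)" by simp
  qed
  then have b: "(\<Sum>u<N. ln (real (cnt N \<phi> u))) \<le> real N * ln (real N)" by simp
  show "0 \<le> Hemp N \<phi>" using a b N unfolding Hemp_alt[OF N] by (simp add: field_simps)
  show "Hemp N \<phi> \<le> ln (real N)" using a b N unfolding Hemp_alt[OF N] by (simp add: field_simps)
qed

lemma ln_step_bound:
  assumes k: "(k::nat) \<ge> 2"
  shows "real (k - 1) * (ln (real k) - ln (real (k - 1))) \<le> ln (real k)"
proof (cases "k = 2")
  case True then show ?thesis by simp
next
  case False
  then have k3: "k \<ge> 3" using k by auto
  have pos: "real (k - 1) > 0" using k by simp
  have "ln (real k) - ln (real (k - 1)) = ln (real k / real (k - 1))" using pos k by (simp add: ln_div)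
  also have "\<dots> \<le> real k / real (k - 1) - 1" using pos k by (intro ln_le_minus_one) auto
  also have "\<dots> = 1 / real (k - 1)" using pos k by (simp add: field_simps of_nat_diff)
  finally have "real (k - 1) * (ln (real k) - ln (real (k - 1))) \<le> real (k - 1) * (1 / real (k - 1))"
    using pos by (intro mult_left_mono) auto
  also have "\<dots> = 1" using pos by simp
  also have "1 < ln (3::real)" by (rule ln3_gt_1)
  also have "ln (3::real) \<le> ln (real k)" using k3 by simp
  finally show ?thesis by simp
qed

definition cnt' :: "nat \<Rightarrow> nat \<Rightarrow> (nat \<Rightarrow> 'b) \<Rightarrow> nat \<Rightarrow> nat" where
  "cnt' N i \<phi> u = card {v\<in>{..<N}. v \<noteq> i \<and> \<phi> v = \<phi> u}"

definition Psi :: "nat \<Rightarrow> nat \<Rightarrow> (nat \<Rightarrow> 'b) \<Rightarrow> real" where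
  "Psi N i \<phi> = (\<Sum>u\<in>{..<N} - {i}. ln (real (cnt' N i \<phi> u)))"

lemma Phi_Psi:
  assumes i: "i < N"
  shows "0 \<le> (\<Sum>u<N. ln (real (cnt N \<phi> u))) - Psi N i \<phi>"
    "(\<Sum>u<N. ln (real (cnt N \<phi> u))) - Psi N i \<phi> \<le> 2 * ln (real N)"
proof -
  define k where "k = cnt N \<phi> i"
  define T where "T = {u\<in>{..<N} - {i}. \<phi> u = \<phi> i}"
  have k1: "1 \<le> k" "k \<le> N" using cnt_bounds[OF i] k_def by auto
  have fin: "finite T" unfolding T_def by auto
  have Ti: "{v\<in>{..<N}. \<phi> v = \<phi> i} = insert i T" using i unfolding T_def by auto
  have cardT: "card T = k - 1"
    using Ti fin unfolding k_def cnt_def T_def by simp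
  have cntT: "cnt N \<phi> u = k" if "u \<in> T" for u
  proof -
    have "\<phi> u = \<phi> i" using that unfolding T_def by simp
    then show ?thesis unfolding k_def cnt_def by simp
  qed
  have cnt'T: "cnt' N i \<phi> u = k - 1" if "u \<in> T" for u
  proof -
    have "{v\<in>{..<N}. v \<noteq> i \<and> \<phi> v = \<phi> u} = T" using that unfolding T_def by auto
    then show ?thesis using cardT unfolding cnt'_def by simp
  qed
  have cnt_nT: "cnt N \<phi> u = cnt' N i \<phi> u" if "u \<in> {..<N} - {i}" "u \<notin> T" for u
  proof -
    have "{v\<in>{..<N}. \<phi> v = \<phi> u} = {v\<in>{..<N}. v \<noteq> i \<and> \<phi> v = \<phi> u}"
      using that unfolding T_def by auto
    then show ?thesis unfolding cnt_def cnt'_def by simp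
  qed
  have "(\<Sum>u<N. ln (real (cnt N \<phi> u))) = ln (real k) + (\<Sum>u\<in>{..<N} - {i}. ln (real (cnt N \<phi> u)))"
    using i unfolding k_def by (subst sum.remove[of _ i]) auto
  then have eq1: "(\<Sum>u<N. ln (real (cnt N \<phi> u))) - Psi N i \<phi>
      = ln (real k) + (\<Sum>u\<in>{..<N} - {i}. ln (real (cnt N \<phi> u)) - ln (real (cnt' N i \<phi> u)))"
    unfolding Psi_def by (simp add: sum_subtractf)
  have "(\<Sum>u\<in>{..<N} - {i}. ln (real (cnt N \<phi> u)) - ln (real (cnt' N i \<phi> u)))
      = (\<Sum>u\<in>T. ln (real (cnt N \<phi> u)) - ln (real (cnt' N i \<phi> u)))"
  proof (rule sum.mono_neutral_right)
    show "finite ({..<N} - {i})" by simp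
    show "T \<subseteq> {..<N} - {i}" unfolding T_def by auto
    show "\<forall>u\<in>{..<N} - {i} - T. ln (real (cnt N \<phi> u)) - ln (real (cnt' N i \<phi> u)) = 0"
      using cnt_nT by auto
  qed
  also have "\<dots> = (\<Sum>u\<in>T. ln (real k) - ln (real (k - 1)))"
    by (rule sum.cong[OF refl]) (simp add: cntT cnt'T)
  also have "\<dots> = real (k - 1) * (ln (real k) - ln (real (k - 1)))"
    using cardT by simp
  finally have eq: "(\<Sum>u<N. ln (real (cnt N \<phi> u))) - Psi N i \<phi> = ln (real k) + real (k - 1) * (ln (real k) - ln (real (k - 1)))"
    using eq1 by simp
  have lnk: "0 \<le> ln (real k)" using k1 by simp
  show "0 \<le> (\<Sum>u<N. ln (real (cnt N \<phi> u))) - Psi N i \<phi>"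
  proof (cases "k = 1")
    case True then show ?thesis using eq by simp
  next
    case False
    then have "k \<ge> 2" using k1 by simp
    then have "ln (real (k - 1)) \<le> ln (real k)" by simp
    then show ?thesis using eq lnk by simp
  qed
  have lnN: "ln (real k) \<le> ln (real N)" using k1 by simp
  show "(\<Sum>u<N. ln (real (cnt N \<phi> u))) - Psi N i \<phi> \<le> 2 * ln (real N)"
  proof (cases "k = 1")
    case True then show ?thesis using eq lnN lnk by simp
  next
    case False
    then have "k \<ge> 2" using k1 by simp
    from ln_step_bound[OF this] show ?thesis using eq lnN by simp
  qed
qed

lemma Psi_cong:
  assumes "\<And>v. v \<noteq> i \<Longrightarrow> \<phi> v = \<psi> v"
  shows "Psi N i \<phi> = Psi N i \<psi>"
proof -
  have "cnt' N i \<phi> u = cnt' N i \<psi> u" if "u \<noteq> i" for u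
  proof -
    have "{v\<in>{..<N}. v \<noteq> i \<and> \<phi> v = \<phi> u} = {v\<in>{..<N}. v \<noteq> i \<and> \<psi> v = \<psi> u}"
      using assms that by auto
    then show ?thesis unfolding cnt'_def by simp
  qed
  then show ?thesis unfolding Psi_def by (intro sum.cong) auto
qed

lemma Hemp_diff:
  assumes N: "N \<ge> 1" and i: "i < N" and agree: "\<And>v. v \<noteq> i \<Longrightarrow> \<phi> v = \<psi> v"
  shows "\<bar>Hemp N \<phi> - Hemp N \<psi>\<bar> \<le> 2 * ln (real N) / real N"
proof -
  have P: "Psi N i \<phi> = Psi N i \<psi>" by (rule Psi_cong[OF agree])
  note a = Phi_Psi[OF i, of \<phi>] and b = Phi_Psi[OF i, of \<psi>]
  have "\<bar>(\<Sum>u<N. ln (real (cnt N \<phi> u))) - (\<Sum>u<N. ln (real (cnt N \<psi> u)))\<bar> \<le> 2 * ln (real N)"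
    using a b P by linarith
  then have "\<bar>(\<Sum>u<N. ln (real (cnt N \<phi> u))) - (\<Sum>u<N. ln (real (cnt N \<psi> u)))\<bar> / real N \<le> 2 * ln (real N) / real N"
    using N by (intro divide_right_mono) auto
  moreover have "Hemp N \<phi> - Hemp N \<psi> = ((\<Sum>u<N. ln (real (cnt N \<psi> u))) - (\<Sum>u<N. ln (real (cnt N \<phi> u)))) / real N"
    unfolding Hemp_alt[OF N] by (simp add: diff_divide_distrib)
  ultimately show ?thesis by (simp add: abs_minus_commute)
qed


definition PP :: "(real^'n \<Rightarrow> real) \<Rightarrow> nat \<Rightarrow> (nat \<Rightarrow> real^'n) measure" where
  "PP p N = PiM {..<N} (\<lambda>_. dens p)"

definition Pe :: "nat \<Rightarrow> nat \<Rightarrow> (nat \<Rightarrow> real^'n) \<Rightarrow> real^'n \<Rightarrow> real" where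
  "Pe m N xs g = (\<Sum>u<N. indicator (bin m g) (xs u)) / real N"

lemma sum_if_card: "finite A \<Longrightarrow> (\<Sum>u\<in>A. if P u then 1 else 0) = real (card {u\<in>A. P u})"
  by (simp add: sum.inter_filter[symmetric])

lemma Pe_card: "Pe m N xs g = real (card {u\<in>{..<N}. quantize m (xs u) = g}) / real N"
proof -
  have "(\<Sum>u<N. indicator (bin m g) (xs u)) = (\<Sum>u<N. if quantize m (xs u) = g then 1 else (0::real))"
    by (intro sum.cong) (auto simp: indicator_def bin_def)
  also have "\<dots> = real (card {u\<in>{..<N}. quantize m (xs u) = g})" by (rule sum_if_card) simp
  finally show ?thesis by (simp add: Pe_def)
qed

lemma Pe_nonneg: "Pe m N xs g \<ge> 0"
  by (simp add: Pe_card)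

lemma Pe_sum:
  assumes N: "N \<ge> 1" and good: "\<forall>u<N. quantize m (xs u) \<in> G" and fin: "finite G"
  shows "(\<Sum>g\<in>G. Pe m N xs g) = 1"
proof -
  have "(\<Sum>g\<in>G. Pe m N xs g) = (\<Sum>u<N. \<Sum>g\<in>G. indicator (bin m g) (xs u)) / real N"
    unfolding Pe_def by (simp add: sum_divide_distrib[symmetric] sum.swap[of _ G])
  also have "(\<Sum>u<N. \<Sum>g\<in>G. indicator (bin m g) (xs u)) = (\<Sum>u<N. (1::real))"
  proof (rule sum.cong[OF refl])
    fix u assume u: "u \<in> {..<N}"
    have "(\<Sum>g\<in>G. indicator (bin m g) (xs u)) = (\<Sum>g\<in>G. if quantize m (xs u) = g then 1 else (0::real))"
      by (intro sum.cong) (auto simp: indicator_def bin_def)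
    also have "\<dots> = 1" using good u by (simp add: sum.delta'[OF fin])
    finally show "(\<Sum>g\<in>G. indicator (bin m g) (xs u)) = (1::real)" .
  qed
  finally show ?thesis using N by simp
qed

lemma Hemp_Pe:
  assumes N: "N \<ge> 1" and good: "\<forall>u<N. quantize m (xs u) \<in> G" and fin: "finite G"
  shows "Hemp N (\<lambda>u. quantize m (xs u)) = - (\<Sum>g\<in>G. Pe m N xs g * ln (Pe m N xs g))"
proof -
  let ?\<phi> = "\<lambda>u. quantize m (xs u)"
  have "(\<Sum>u<N. ln (real (cnt N ?\<phi> u) / real N))
      = (\<Sum>g\<in>G. \<Sum>u\<in>{u. u \<in> {..<N} \<and> ?\<phi> u = g}. ln (real (cnt N ?\<phi> u) / real N))"
    by (rule sum.group[symmetric]) (use fin good in auto)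
  also have "\<dots> = (\<Sum>g\<in>G. real N * (Pe m N xs g * ln (Pe m N xs g)))"
  proof (rule sum.cong[OF refl])
    fix g assume "g \<in> G"
    have "(\<Sum>u\<in>{u. u \<in> {..<N} \<and> ?\<phi> u = g}. ln (real (cnt N ?\<phi> u) / real N))
        = (\<Sum>u\<in>{u. u \<in> {..<N} \<and> ?\<phi> u = g}. ln (Pe m N xs g))"
      by (intro sum.cong) (auto simp: cnt_def Pe_card)
    also have "\<dots> = real (card {u\<in>{..<N}. ?\<phi> u = g}) * ln (Pe m N xs g)" by simp
    also have "\<dots> = real N * (Pe m N xs g * ln (Pe m N xs g))" using N by (simp add: Pe_card)
    finally show "(\<Sum>u\<in>{u. u \<in> {..<N} \<and> ?\<phi> u = g}. ln (real (cnt N ?\<phi> u) / real N))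
        = real N * (Pe m N xs g * ln (Pe m N xs g))" .
  qed
  finally show ?thesis using N unfolding Hemp_def by (simp add: sum_distrib_left[symmetric])
qed

lemma Pe_measurable[measurable]: "(\<lambda>xs. Pe m N xs g) \<in> borel_measurable (PP p N)"
  unfolding Pe_def PP_def by measurable

lemma cnt_real_sum: "real (cnt N \<phi> u) = (\<Sum>v<N. if \<phi> v = \<phi> u then 1 else 0)"
  unfolding cnt_def by (rule sum_if_card[symmetric]) simp

lemma Hemp_measurable[measurable]: "(\<lambda>xs. Hemp N (\<lambda>u. quantize m (xs u))) \<in> borel_measurable (PP p N)"
proof -
  have eq: "(\<lambda>xs. Hemp N (\<lambda>u. quantize m (xs u))) =
    (\<lambda>xs. - (\<Sum>u<N. ln ((\<Sum>v<N. if quantize m (xs v) = quantize m (xs u) then 1 else 0) / real N)) / real N)"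
    unfolding Hemp_def cnt_real_sum by simp
  show ?thesis unfolding eq PP_def by measurable
qed


lemma xlog_lower: "(a::real) \<ge> 0 \<Longrightarrow> b > 0 \<Longrightarrow> a - b \<le> a * ln (a / b)"
proof -
  assume a: "a \<ge> 0" and b: "b > 0"
  show ?thesis
  proof (cases "a = 0")
    case True then show ?thesis using b by simp
  next
    case False
    then have ap: "a > 0" using a by simp
    have "ln (b / a) \<le> b / a - 1" using ap b by (intro ln_le_minus_one) auto
    moreover have "ln (b / a) = - ln (a / b)" using ap b by (simp add: ln_div)
    ultimately have "- ln (a / b) \<le> b / a - 1" by simp
    then have "a * (- ln (a / b)) \<le> a * (b / a - 1)" using ap by (intro mult_left_mono) auto
    moreover have "a * (b / a - 1) = b - a" using ap by (simp add: field_simps)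
    ultimately show ?thesis by (simp add: algebra_simps)
  qed
qed

lemma xlog_upper: "(a::real) \<ge> 0 \<Longrightarrow> b > 0 \<Longrightarrow> c > 0 \<Longrightarrow> a * ln (a / b) \<le> a\<^sup>2 / (b * c) - a + a * ln c"
proof -
  assume a: "a \<ge> 0" and b: "b > 0" and c: "c > 0"
  show ?thesis
  proof (cases "a = 0")
    case True then show ?thesis by simp
  next
    case False
    then have ap: "a > 0" using a by simp
    have "ln (a / (b * c)) \<le> a / (b * c) - 1" using ap b c by (intro ln_le_minus_one) auto
    moreover have "ln (a / (b * c)) = ln (a / b) - ln c" using ap b c by (simp add: ln_div ln_mult)
    ultimately have "ln (a / b) \<le> a / (b * c) - 1 + ln c" by simp
    then have "a * ln (a / b) \<le> a * (a / (b * c) - 1 + ln c)" using ap by (intro mult_left_mono) auto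
    moreover have "a * (a / (b * c) - 1 + ln c) = a\<^sup>2 / (b * c) - a + a * ln c"
      by (simp add: power2_eq_square field_simps)
    ultimately show ?thesis by simp
  qed
qed

lemma sum_if_eq: "u < N \<Longrightarrow> (\<Sum>v<N. if u = v then a else b) = a + (real N - 1) * (b::real)"
proof -
  assume u: "u < N"
  have "(\<Sum>v<N. if u = v then a else b) = (\<Sum>v<N. (if u = v then a - b else 0) + b)"
    by (intro sum.cong) auto
  also have "\<dots> = (a - b) + real N * b" using u by (simp add: sum.distrib)
  finally show ?thesis by (simp add: algebra_simps)
qed

lemma Pe_le1: "Pe m N xs g \<le> 1"
proof -
  have "card {u\<in>{..<N}. quantize m (xs u) = g} \<le> card {..<N}" by (intro card_mono) auto
  then show ?thesis by (cases "N = 0") (auto simp: Pe_card)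
qed

context
  fixes p :: "real^'n \<Rightarrow> real" and L :: real and m :: nat and N :: nat
  assumes m: "m > 0" and L: "L > 0" and p_nonneg: "\<And>v. p v \<ge> 0"
    and p_lip: "\<And>v w. \<bar>p v - p w\<bar> \<le> L * (\<Sum>i\<in>UNIV. \<bar>v $ i - w $ i\<bar>)"
    and p_meas[measurable]: "p \<in> borel_measurable borel"
    and prob: "prob_space (dens p)"
    and cube1: "measure (dens p) unit_cube = 1"
    and N: "N \<ge> 1"
begin

interpretation Q: prob_space "dens p" by (rule prob)
interpretation PI: product_prob_space "\<lambda>_::nat. dens p" "{..<N}" by unfold_locales
interpretation P: prob_space "PP p N" unfolding PP_def by (rule prob_space_PiM) (rule prob)

lemmas det_facts = measure_Gp[OF m L p_nonneg p_lip p_meas prob cube1]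
  sum_Pq_Gp[OF m L p_nonneg p_lip p_meas prob cube1]
  card_Gp[OF m L p_nonneg p_lip p_meas prob cube1]

lemma good_AE: "AE xs in PP p N. \<forall>u\<in>{..<N}. quantize m (xs u) \<in> Gp p m"
proof (rule eventually_ball_finite)
  show "finite {..<N}" by simp
  have "AE v in dens p. v \<in> quantize m -` Gp p m" by (rule Q.AE_prob_1) (rule det_facts(1))
  then show "\<forall>u\<in>{..<N}. AE xs in PP p N. quantize m (xs u) \<in> Gp p m"
    unfolding PP_def by (auto intro: AE_PiM_component[where P="\<lambda>v. quantize m v \<in> Gp p m"] prob)
qed

lemma int_ind:
  assumes u: "u < N"
  shows "(\<integral>xs. indicator (bin m g) (xs u) \<partial>PP p N) = Pq p m g"
proof -
  have d: "distr (PP p N) (dens p) (\<lambda>\<omega>. \<omega> u) = dens p"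
    unfolding PP_def by (rule distr_PiM_component) (use u prob in auto)
  have "(\<integral>v. indicator (bin m g) v \<partial>distr (PP p N) (dens p) (\<lambda>\<omega>. \<omega> u)) = (\<integral>xs. (indicator (bin m g) (xs u) :: real) \<partial>PP p N)"
    by (rule integral_distr) (use u in \<open>auto simp: PP_def\<close>)
  then have "(\<integral>xs. (indicator (bin m g) (xs u) :: real) \<partial>PP p N) = (\<integral>v. indicator (bin m g) v \<partial>distr (PP p N) (dens p) (\<lambda>\<omega>. \<omega> u))"
    by simp
  also have "\<dots> = Pq p m g" unfolding d by (simp add: Pq_def)
  finally show ?thesis .
qed

lemma int_ind2:
  assumes u: "u < N" and v: "v < N" and uv: "u \<noteq> v"
  shows "(\<integral>xs. indicator (bin m g) (xs u) * indicator (bin m g) (xs v) \<partial>PP p N) = (Pq p m g)\<^sup>2"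
proof -
  define E where "E = prod_emb {..<N} (\<lambda>_. dens p) {u, v} (\<Pi>\<^sub>E j\<in>{u, v}. bin m g)"
  have Es: "E \<in> sets (PP p N)" unfolding E_def PP_def
    by (rule sets_PiM_I) (use u v in auto)
  have "(\<integral>xs. (indicator (bin m g) (xs u) * indicator (bin m g) (xs v) :: real) \<partial>PP p N) = (\<integral>xs. (indicator E xs :: real) \<partial>PP p N)"
  proof -
    have "\<forall>xs\<in>space (PP p N). indicator (bin m g) (xs u) * indicator (bin m g) (xs v) = (indicator E xs :: real)"
    proof
      fix xs assume xs: "xs \<in> space (PP p N)"
      then have "xs \<in> E \<longleftrightarrow> xs u \<in> bin m g \<and> xs v \<in> bin m g"
        using u v unfolding E_def PP_def by (auto simp: prod_emb_def space_PiM)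
      then show "indicator (bin m g) (xs u) * indicator (bin m g) (xs v) = (indicator E xs :: real)"
        by (auto simp: indicator_def)
    qed
    then show ?thesis by (intro Bochner_Integration.integral_cong) auto
  qed
  also have "\<dots> = measure (PP p N) E" using Es by simp
  also have "\<dots> = (\<Prod>j\<in>{u, v}. measure (dens p) (bin m g))"
    unfolding E_def PP_def by (rule PI.measure_PiM_emb) (use u v in auto)
  also have "\<dots> = (Pq p m g)\<^sup>2" using uv by (simp add: Pq_def power2_eq_square)
  finally show ?thesis .
qed

lemma comp_meas[measurable]: "u < N \<Longrightarrow> (\<lambda>xs. xs u) \<in> measurable (PiM {..<N} (\<lambda>_. dens p)) (dens p)"
  by (rule measurable_component_singleton) simp

lemma ind_integrable: "u < N \<Longrightarrow> integrable (PP p N) (\<lambda>xs. indicator (bin m g) (xs u) :: real)"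
  by (intro P.integrable_const_bound[where B=1]) (auto simp: PP_def)

lemma E_Pe: "(\<integral>xs. Pe m N xs g \<partial>PP p N) = Pq p m g"
proof -
  have "(\<integral>xs. Pe m N xs g \<partial>PP p N) = (\<integral>xs. (\<Sum>u<N. indicator (bin m g) (xs u) :: real) \<partial>PP p N) / real N"
    unfolding Pe_def by simp
  also have "(\<integral>xs. (\<Sum>u<N. indicator (bin m g) (xs u) :: real) \<partial>PP p N) = (\<Sum>u<N. (\<integral>xs. (indicator (bin m g) (xs u) :: real) \<partial>PP p N))"
    by (rule Bochner_Integration.integral_sum) (auto intro: ind_integrable)
  also have "\<dots> = (\<Sum>u<N. Pq p m g)" by (intro sum.cong) (simp_all add: int_ind)
  finally show ?thesis using N by simp
qed

lemma E_Pe2: "(\<integral>xs. (Pe m N xs g)\<^sup>2 \<partial>PP p N) = Pq p m g / real N + (real N - 1) / real N * (Pq p m g)\<^sup>2"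
proof -
  let ?I = "\<lambda>u xs. indicator (bin m g) (xs u) :: real"
  have sq: "(Pe m N xs g)\<^sup>2 = (\<Sum>u<N. \<Sum>v<N. ?I u xs * ?I v xs) / (real N)\<^sup>2" for xs
    unfolding Pe_def by (simp add: power2_eq_square sum_product)
  have intuv: "integrable (PP p N) (\<lambda>xs. ?I u xs * ?I v xs)" if "u < N" "v < N" for u v
    using that by (intro P.integrable_const_bound[where B=1]) (auto simp: PP_def indicator_def)
  have "(\<integral>xs. (\<Sum>u<N. \<Sum>v<N. ?I u xs * ?I v xs) \<partial>PP p N) = (\<Sum>u<N. \<Sum>v<N. (\<integral>xs. ?I u xs * ?I v xs \<partial>PP p N))"
  proof -
    have "(\<integral>xs. (\<Sum>u<N. \<Sum>v<N. ?I u xs * ?I v xs) \<partial>PP p N) = (\<Sum>u<N. (\<integral>xs. (\<Sum>v<N. ?I u xs * ?I v xs) \<partial>PP p N))"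
      by (rule Bochner_Integration.integral_sum, rule Bochner_Integration.integrable_sum, rule intuv) simp_all
    also have "\<dots> = (\<Sum>u<N. \<Sum>v<N. (\<integral>xs. ?I u xs * ?I v xs \<partial>PP p N))"
      by (intro sum.cong refl, rule Bochner_Integration.integral_sum, rule intuv) simp_all
    finally show ?thesis .
  qed
  also have "\<dots> = (\<Sum>u<N. \<Sum>v<N. if u = v then Pq p m g else (Pq p m g)\<^sup>2)"
  proof (intro sum.cong refl)
    fix u v assume u: "u \<in> {..<N}" and v: "v \<in> {..<N}"
    show "(\<integral>xs. ?I u xs * ?I v xs \<partial>PP p N) = (if u = v then Pq p m g else (Pq p m g)\<^sup>2)"
    proof (cases "u = v")
      case True
      have "(\<lambda>xs. ?I u xs * ?I u xs) = ?I u" by (auto simp: fun_eq_iff indicator_def)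
      then show ?thesis using True u int_ind by simp
    next
      case False
      then show ?thesis using u v int_ind2 by simp
    qed
  qed
  also have "\<dots> = (\<Sum>u<N. Pq p m g + (real N - 1) * (Pq p m g)\<^sup>2)"
    by (intro sum.cong refl sum_if_eq) simp
  also have "\<dots> = real N * (Pq p m g + (real N - 1) * (Pq p m g)\<^sup>2)" by simp
  finally have "(\<integral>xs. (\<Sum>u<N. \<Sum>v<N. ?I u xs * ?I v xs) \<partial>PP p N) = real N * (Pq p m g + (real N - 1) * (Pq p m g)\<^sup>2)" .
  then have "(\<integral>xs. (Pe m N xs g)\<^sup>2 \<partial>PP p N) = real N * (Pq p m g + (real N - 1) * (Pq p m g)\<^sup>2) / (real N)\<^sup>2"
    unfolding sq by simp
  also have "\<dots> = Pq p m g / real N + (real N - 1) / real N * (Pq p m g)\<^sup>2"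
    using N by (simp add: power2_eq_square field_simps)
  finally show ?thesis .
qed


lemma Hemp_integrable: "integrable (PP p N) (\<lambda>xs. Hemp N (\<lambda>u. quantize m (xs u)))"
proof (intro P.integrable_const_bound[where B="ln (real N)"])
  show "AE x in PP p N. norm (Hemp N (\<lambda>u. quantize m (x u))) \<le> ln (real N)"
  proof (rule AE_I2)
    fix x :: "nat \<Rightarrow> real^'n"
    have "0 \<le> Hemp N (\<lambda>u. quantize m (x u))" "Hemp N (\<lambda>u. quantize m (x u)) \<le> ln (real N)"
      by (rule Hemp_bounds[OF N])+
    then show "norm (Hemp N (\<lambda>u. quantize m (x u))) \<le> ln (real N)" by simp
  qed
qed simp

lemma Pe_integrable: "integrable (PP p N) (\<lambda>xs. Pe m N xs g)"
proof (intro P.integrable_const_bound[where B=1])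
  show "AE x in PP p N. norm (Pe m N x g) \<le> 1"
  proof (rule AE_I2)
    fix x
    have "0 \<le> Pe m N x g" "Pe m N x g \<le> 1" by (rule Pe_nonneg, rule Pe_le1)
    then show "norm (Pe m N x g) \<le> 1" by simp
  qed
qed simp

lemma Pe2_integrable: "integrable (PP p N) (\<lambda>xs. (Pe m N xs g)\<^sup>2)"
proof (intro P.integrable_const_bound[where B=1])
  show "AE x in PP p N. norm ((Pe m N x g)\<^sup>2) \<le> 1"
  proof (rule AE_I2)
    fix x
    have "(Pe m N x g)\<^sup>2 \<le> 1\<^sup>2" using Pe_nonneg[of m N x g] Pe_le1[of m N x g] by (intro power_mono) auto
    then show "norm ((Pe m N x g)\<^sup>2) \<le> 1" by simp
  qed
qed simp

lemma bias:
  defines "H \<equiv> - (\<Sum>g\<in>Gp p m. Pq p m g * ln (Pq p m g))"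
  defines "c \<equiv> 1 + (real (card (Gp p m)) - 1) / real N"
  shows "H - ln c \<le> (\<integral>xs. Hemp N (\<lambda>u. quantize m (xs u)) \<partial>PP p N)"
    "(\<integral>xs. Hemp N (\<lambda>u. quantize m (xs u)) \<partial>PP p N) \<le> H"
proof -
  let ?F = "\<lambda>xs. Hemp N (\<lambda>u. quantize m (xs u))"
  let ?G = "Gp p m"
  have finG: "finite ?G" by (rule finite_Gp)
  have Pqpos: "Pq p m g > 0" if "g \<in> ?G" for g using that by (simp add: Gp_def)
  have "?G \<noteq> {}" using det_facts(2) by auto
  then have cardpos: "card ?G \<ge> 1" using finG by (simp add: Suc_le_eq card_gt_0_iff)
  have Np: "real N > 0" using N by simp
  have c1: "c \<ge> 1" using cardpos Np by (simp add: c_def)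
  then have cpos: "c > 0" by simp
  define D where "D xs = - ?F xs - (\<Sum>g\<in>?G. Pe m N xs g * ln (Pq p m g))" for xs
  define S where "S xs = (\<Sum>g\<in>?G. (Pe m N xs g)\<^sup>2 / Pq p m g)" for xs
  have intD: "integrable (PP p N) D"
    unfolding D_def by (intro Bochner_Integration.integrable_diff integrable_minus Hemp_integrable
        Bochner_Integration.integrable_sum integrable_mult_left Pe_integrable)
  have intS: "integrable (PP p N) S"
    unfolding S_def by (intro Bochner_Integration.integrable_sum integrable_divide Pe2_integrable)
  have intB: "integrable (PP p N) (\<lambda>xs. S xs / c - 1 + ln c)"
    using intS by simp
  have pointwise: "0 \<le> D xs \<and> D xs \<le> S xs / c - 1 + ln c" if good: "\<forall>u\<in>{..<N}. quantize m (xs u) \<in> ?G" for xs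
  proof -
    have good': "\<forall>u<N. quantize m (xs u) \<in> ?G" using good by auto
    have F: "?F xs = - (\<Sum>g\<in>?G. Pe m N xs g * ln (Pe m N xs g))" by (rule Hemp_Pe[OF N good' finG])
    have s1: "(\<Sum>g\<in>?G. Pe m N xs g) = 1" by (rule Pe_sum[OF N good' finG])
    have split: "Pe m N xs g * ln (Pe m N xs g) = Pe m N xs g * ln (Pe m N xs g / Pq p m g) + Pe m N xs g * ln (Pq p m g)"
      if "g \<in> ?G" for g
    proof (cases "Pe m N xs g = 0")
      case True then show ?thesis by simp
    next
      case False
      then have "Pe m N xs g > 0" using Pe_nonneg[of m N xs g] by simp
      then show ?thesis using Pqpos[OF that] by (simp add: ln_div algebra_simps)
    qed
    have Dxs: "D xs = (\<Sum>g\<in>?G. Pe m N xs g * ln (Pe m N xs g / Pq p m g))"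
    proof -
      have "(\<Sum>g\<in>?G. Pe m N xs g * ln (Pe m N xs g)) = (\<Sum>g\<in>?G. Pe m N xs g * ln (Pe m N xs g / Pq p m g)) + (\<Sum>g\<in>?G. Pe m N xs g * ln (Pq p m g))"
        by (simp add: split sum.distrib)
      then show ?thesis unfolding D_def F by simp
    qed
    have "(\<Sum>g\<in>?G. Pe m N xs g - Pq p m g) \<le> (\<Sum>g\<in>?G. Pe m N xs g * ln (Pe m N xs g / Pq p m g))"
      by (intro sum_mono xlog_lower Pe_nonneg Pqpos)
    moreover have "(\<Sum>g\<in>?G. Pe m N xs g - Pq p m g) = 0" using s1 det_facts(2) by (simp add: sum_subtractf)
    ultimately have lo: "0 \<le> D xs" using Dxs by simp
    have "(\<Sum>g\<in>?G. Pe m N xs g * ln (Pe m N xs g / Pq p m g)) \<le> (\<Sum>g\<in>?G. (Pe m N xs g)\<^sup>2 / (Pq p m g * c) - Pe m N xs g + Pe m N xs g * ln c)"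
      by (intro sum_mono xlog_upper Pe_nonneg Pqpos cpos)
    also have "\<dots> = (\<Sum>g\<in>?G. (Pe m N xs g)\<^sup>2 / (Pq p m g * c)) - (\<Sum>g\<in>?G. Pe m N xs g) + (\<Sum>g\<in>?G. Pe m N xs g * ln c)"
      by (simp add: sum.distrib sum_subtractf)
    also have "(\<Sum>g\<in>?G. (Pe m N xs g)\<^sup>2 / (Pq p m g * c)) = S xs / c"
      unfolding S_def by (simp add: sum_divide_distrib divide_divide_eq_left)
    also have "(\<Sum>g\<in>?G. Pe m N xs g * ln c) = (\<Sum>g\<in>?G. Pe m N xs g) * ln c"
      by (simp add: sum_distrib_right)
    finally have "(\<Sum>g\<in>?G. Pe m N xs g * ln (Pe m N xs g / Pq p m g)) \<le> S xs / c - (\<Sum>g\<in>?G. Pe m N xs g) + (\<Sum>g\<in>?G. Pe m N xs g) * ln c" .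
    then have "(\<Sum>g\<in>?G. Pe m N xs g * ln (Pe m N xs g / Pq p m g)) \<le> S xs / c - 1 + ln c"
      using s1 by simp
    then have up: "D xs \<le> S xs / c - 1 + ln c" using Dxs by simp
    show ?thesis using lo up by simp
  qed
  have AEpos: "AE xs in PP p N. 0 \<le> D xs" using good_AE by (rule eventually_mono) (use pointwise in blast)
  have AEup: "AE xs in PP p N. D xs \<le> S xs / c - 1 + ln c" using good_AE by (rule eventually_mono) (use pointwise in blast)
  have ED: "(\<integral>xs. D xs \<partial>PP p N) = - (\<integral>xs. ?F xs \<partial>PP p N) + H"
  proof -
    have "(\<integral>xs. D xs \<partial>PP p N) = - (\<integral>xs. ?F xs \<partial>PP p N) - (\<Sum>g\<in>?G. (\<integral>xs. Pe m N xs g \<partial>PP p N) * ln (Pq p m g))"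
      unfolding D_def
      by (subst Bochner_Integration.integral_diff)
         (auto intro!: Hemp_integrable Bochner_Integration.integrable_sum integrable_mult_left Pe_integrable
           simp: Bochner_Integration.integral_sum[OF integrable_mult_left[OF Pe_integrable]])
    also have "\<dots> = - (\<integral>xs. ?F xs \<partial>PP p N) + H" by (simp add: E_Pe H_def sum_negf)
    finally show ?thesis .
  qed
  have ES: "(\<integral>xs. S xs \<partial>PP p N) = c"
  proof -
    have "(\<integral>xs. S xs \<partial>PP p N) = (\<Sum>g\<in>?G. (\<integral>xs. (Pe m N xs g)\<^sup>2 \<partial>PP p N) / Pq p m g)"
      unfolding S_def by (simp add: Bochner_Integration.integral_sum[OF integrable_divide[OF Pe2_integrable]])
    also have "\<dots> = (\<Sum>g\<in>?G. 1 / real N + (real N - 1) / real N * Pq p m g)"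
    proof (intro sum.cong refl)
      fix g assume g: "g \<in> ?G"
      show "(\<integral>xs. (Pe m N xs g)\<^sup>2 \<partial>PP p N) / Pq p m g = 1 / real N + (real N - 1) / real N * Pq p m g"
        unfolding E_Pe2 using Pqpos[OF g] Np by (simp add: power2_eq_square field_simps)
    qed
    also have "\<dots> = (\<Sum>g\<in>?G. 1 / real N) + (real N - 1) / real N * (\<Sum>g\<in>?G. Pq p m g)"
      by (simp only: sum.distrib sum_distrib_left)
    also have "\<dots> = real (card ?G) / real N + (real N - 1) / real N"
      using det_facts(2) by simp
    also have "\<dots> = c" using Np by (simp add: c_def field_simps)
    finally show ?thesis .
  qed
  have "0 \<le> (\<integral>xs. D xs \<partial>PP p N)" by (rule integral_nonneg_AE[OF AEpos])
  moreover have "(\<integral>xs. D xs \<partial>PP p N) \<le> (\<integral>xs. S xs / c - 1 + ln c \<partial>PP p N)"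
    by (rule integral_mono_AE[OF intD intB AEup])
  moreover have "(\<integral>xs. S xs / c - 1 + ln c \<partial>PP p N) = ln c"
    using intS ES cpos by (simp add: P.prob_space)
  ultimately show "H - ln c \<le> (\<integral>xs. ?F xs \<partial>PP p N)" "(\<integral>xs. ?F xs \<partial>PP p N) \<le> H"
    using ED by linarith+
qed

end


lemma Hemp_cong: "(\<And>u. u < N \<Longrightarrow> \<phi> u = \<psi> u) \<Longrightarrow> Hemp N \<phi> = Hemp N \<psi>"
proof -
  assume h: "\<And>u. u < N \<Longrightarrow> \<phi> u = \<psi> u"
  have "cnt N \<phi> u = cnt N \<psi> u" if "u < N" for u
  proof -
    have "{v\<in>{..<N}. \<phi> v = \<phi> u} = {v\<in>{..<N}. \<psi> v = \<psi> u}" using h that by auto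
    then show ?thesis by (simp add: cnt_def)
  qed
  then show ?thesis unfolding Hemp_def by (intro arg_cong[where f="\<lambda>x. - x / real N"] sum.cong) auto
qed

lemma Hemp_one: "Hemp 1 \<phi> = 0"
proof -
  have "{v\<in>{..<1::nat}. \<phi> v = \<phi> 0} = {0}" by auto
  then have "cnt 1 \<phi> 0 = 1" by (simp add: cnt_def)
  then show ?thesis by (simp add: Hemp_def)
qed

lemma alpha_facts: "alpha_const > 0" "alpha_const < 1 / (exp 1)\<^sup>2"
proof -
  define e where "e = exp (1::real)"
  define s where "s = sqrt (e\<^sup>2 + 4)"
  have e0: "e > 0" by (simp add: e_def)
  have "sqrt (e\<^sup>2) < s" unfolding s_def by (intro real_sqrt_less_mono) simp
  then have se: "s > e" using e0 by simp
  have a: "alpha_const = (s - e) / (2 * e)" by (simp add: alpha_const_def s_def e_def)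
  show "alpha_const > 0" using se e0 by (simp add: a)
  have "(s - e) * (s + e) = 4" using e0 by (simp add: s_def algebra_simps power2_eq_square)
  then have "s - e = 4 / (s + e)" using se e0 by (simp add: field_simps)
  also have "\<dots> < 4 / (2 * e)" using se e0 by (intro divide_strict_left_mono) auto
  finally have "s - e < 2 / e" by simp
  then have "(s - e) / (2 * e) < (2 / e) / (2 * e)" using e0 by (intro divide_strict_right_mono) auto
  also have "(2 / e) / (2 * e) = 1 / e\<^sup>2" using e0 by (simp add: power2_eq_square field_simps)
  finally show "alpha_const < 1 / (exp 1)\<^sup>2" by (simp add: a e_def)
qed


theorem theorem2:
  fixes M :: "'a measure"
    and p :: "real ^ 'n \<Rightarrow> real"
    and x :: "'a \<Rightarrow> real ^ 'n"
    and X :: "nat \<Rightarrow> 'a \<Rightarrow> real ^ 'n"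
    and L :: real and N :: nat and Mq :: nat
  assumes "prob_space M"
    and "L > 0"
    and p_nonneg: "\<And>v. p v \<ge> 0"
    and x_density: "distributed M lborel x (\<lambda>v. ennreal (p v))"
    and x_cube: "measure M {\<omega> \<in> space M. x \<omega> \<in> unit_cube} = 1"
    and p_lip: "\<And>v w. \<bar>p v - p w\<bar> \<le> L * (\<Sum>i\<in>UNIV. \<bar>v $ i - w $ i\<bar>)"
    and "N \<ge> 1"
    and X_dist: "\<And>i. i < N \<Longrightarrow> distributed M lborel (X i) (\<lambda>v. ennreal (p v))"
    and X_indep: "prob_space.indep_vars M (\<lambda>_. borel) X {..<N}"
    and M_large: "real Mq \<ge> 1 / (alpha_const * eta CARD('n) L)"
  shows "\<forall>\<delta>. 0 < \<delta> \<and> \<delta> < 1 \<longrightarrow>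
     measure M {\<omega> \<in> space M.
        \<bar>entropy_estimator Mq N (\<lambda>i. X i \<omega>) - diff_entropy p\<bar>
          \<le> L * real CARD('n) / (2 * real Mq) * ln (real Mq * eta CARD('n) L)
             + sqrt (2 / real N * ln (2 / \<delta>)) * ln (real N)
             + ln (1 + (real Mq ^ CARD('n) - 1) / real N)}
     > 1 - \<delta>"
proof (intro allI impI)
  fix \<delta> :: real assume \<delta>: "0 < \<delta> \<and> \<delta> < 1"
  interpret M: prob_space M by (rule assms(1))
  have L: "L > 0" by (rule assms(2))
  have N: "N \<ge> 1" by (rule assms(7))
  let ?K = "CARD('n)"
  have K1: "?K \<ge> 1" by (simp add: Suc_le_eq)
  have eta_pos: "eta ?K L > 0"
    using K1 L by (simp add: eta_def)
  have al: "alpha_const > 0" "alpha_const < 1 / (exp 1)\<^sup>2" by (rule alpha_facts)+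
  have Mq_eta: "real Mq * eta ?K L \<ge> 1 / alpha_const"
  proof -
    have "real Mq * eta ?K L \<ge> 1 / (alpha_const * eta ?K L) * eta ?K L"
      using M_large eta_pos by (intro mult_right_mono) auto
    also have "1 / (alpha_const * eta ?K L) * eta ?K L = 1 / alpha_const" using eta_pos by simp
    finally show ?thesis .
  qed
  have e2: "1 / alpha_const > (exp 1)\<^sup>2"
  proof -
    have "(exp 1)\<^sup>2 = 1 / (1 / (exp (1::real))\<^sup>2)" by simp
    also have "\<dots> < 1 / alpha_const" using al by (intro divide_strict_left_mono) auto
    finally show ?thesis .
  qed
  have Mq_pos: "Mq > 0"
  proof -
    have "1 / (alpha_const * eta ?K L) > 0" using al eta_pos by simp
    then show ?thesis using M_large by (cases Mq) auto
  qed
  have ln_gt2: "ln (real Mq * eta ?K L) > 2"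
  proof -
    have pos: "real Mq * eta ?K L > 0" using Mq_pos eta_pos by simp
    have "(exp 1)\<^sup>2 < real Mq * eta ?K L" using e2 Mq_eta by linarith
    then have "ln ((exp 1)\<^sup>2) < ln (real Mq * eta ?K L)" using pos by (subst ln_less_cancel_iff) auto
    then show ?thesis by (simp add: ln_realpow)
  qed
  define w where "w = L * real ?K / real Mq"
  define A where "A = L * real ?K / (2 * real Mq) * ln (real Mq * eta ?K L)"
  have w_pos: "w > 0" using L Mq_pos by (simp add: w_def)
  have Aw: "A > w"
  proof -
    have "A = w / 2 * ln (real Mq * eta ?K L)" by (simp add: A_def w_def)
    also have "\<dots> > w / 2 * 2" using w_pos ln_gt2 by (intro mult_strict_left_mono) auto
    finally show ?thesis by simp
  qed
  have dens_eq: "distr M lborel x = dens p"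
    using distributed_distr_eq_density[OF x_density] by (simp add: dens_def)
  have pm: "(\<lambda>v. ennreal (p v)) \<in> borel_measurable lborel" by (rule distributed_borel_measurable[OF x_density])
  have p_meas[measurable]: "p \<in> borel_measurable borel"
  proof -
    have "(\<lambda>v. enn2real (ennreal (p v))) \<in> borel_measurable borel" using pm by simp
    moreover have "(\<lambda>v. enn2real (ennreal (p v))) = p" using p_nonneg by (simp add: fun_eq_iff)
    ultimately show ?thesis by simp
  qed
  have xm: "x \<in> measurable M lborel" by (rule distributed_measurable[OF x_density])
  have prob: "prob_space (dens p)"
    using M.prob_space_distr[OF xm] dens_eq by simp
  have cube1: "measure (dens p) unit_cube = 1"
  proof -
    have "measure (dens p) unit_cube = measure M (x -` unit_cube \<inter> space M)"
      unfolding dens_eq[symmetric] by (rule measure_distr[OF xm]) simp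
    also have "x -` unit_cube \<inter> space M = {\<omega> \<in> space M. x \<omega> \<in> unit_cube}" by auto
    finally show ?thesis using x_cube by simp
  qed
  note ctx = L p_nonneg p_lip p_meas prob cube1
  have Xm: "X i \<in> measurable M borel" if "i < N" for i
    using distributed_measurable[OF X_dist[OF that]] by simp
  have Xd: "distr M borel (X i) = dens p" if "i < N" for i
  proof -
    have "distr M borel (X i) = distr M lborel (X i)" by (rule distr_cong) auto
    also have "\<dots> = dens p" using distributed_distr_eq_density[OF X_dist[OF that]] by (simp add: dens_def)
    finally show ?thesis .
  qed
  have ne: "{..<N} \<noteq> {}" using N by (simp add: lessThan_empty_iff)
  have Pdist: "distr M (PiM {..<N} (\<lambda>_. borel)) (\<lambda>\<omega>. \<lambda>i\<in>{..<N}. X i \<omega>) = PP p N"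
  proof -
    have "distr M (PiM {..<N} (\<lambda>_. borel)) (\<lambda>\<omega>. \<lambda>i\<in>{..<N}. X i \<omega>) = (PiM {..<N} (\<lambda>i. distr M borel (X i)))"
      using M.indep_vars_iff_distr_eq_PiM'[of "{..<N}" X "\<lambda>_. borel"] ne Xm X_indep by simp
    also have "\<dots> = PP p N" unfolding PP_def by (intro PiM_cong) (simp_all add: Xd)
    finally show ?thesis .
  qed
  have fm: "(\<lambda>\<omega>. \<lambda>i\<in>{..<N}. X i \<omega>) \<in> measurable M (PiM {..<N} (\<lambda>_. borel))"
    by (intro measurable_restrict Xm) simp
  have sets_eq: "sets (PiM {..<N} (\<lambda>_. borel)) = sets (PP p N)"
    unfolding PP_def by (intro sets_PiM_cong) simp_all
  have space_eq: "space (PiM {..<N} (\<lambda>_. borel)) = space (PP p N)"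
    unfolding PP_def by (simp add: space_PiM)
  interpret P: prob_space "PP p N" unfolding PP_def by (rule prob_space_PiM) (rule prob)
  define F where "F xs = Hemp N (\<lambda>u. quantize Mq (xs u))" for xs :: "nat \<Rightarrow> real^'n"
  have Fm[measurable]: "F \<in> borel_measurable (PP p N)" unfolding F_def by (rule Hemp_measurable)
  have est: "entropy_estimator Mq N (\<lambda>i. X i \<omega>) = F (\<lambda>i\<in>{..<N}. X i \<omega>) - real ?K * ln (real Mq)" for \<omega>
  proof -
    have "entropy_estimator Mq N (\<lambda>i. X i \<omega>) = Hemp N (\<lambda>u. quantize Mq (X u \<omega>)) - real ?K * ln (real Mq)"
      unfolding entropy_estimator_def quantized_empirical_def by (simp add: entropy_empirical[OF N])
    also have "Hemp N (\<lambda>u. quantize Mq (X u \<omega>)) = F (\<lambda>i\<in>{..<N}. X i \<omega>)"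
      unfolding F_def by (rule Hemp_cong) simp
    finally show ?thesis .
  qed
  define h where "h = diff_entropy p"
  define H where "H = - (\<Sum>g\<in>Gp p Mq. Pq p Mq g * ln (Pq p Mq g))"
  define c where "c = 1 + (real (card (Gp p Mq)) - 1) / real N"
  define EF where "EF = (\<integral>xs. F xs \<partial>PP p N)"
  define B where "B = sqrt (2 / real N * ln (2 / \<delta>)) * ln (real N)"
  define C where "C = ln (1 + (real Mq ^ ?K - 1) / real N)"
  define R where "R = A + B + C"
  define t where "t = B + (A - w)"
  have det: "0 \<le> H - real ?K * ln (real Mq) - h" "H - real ?K * ln (real Mq) - h \<le> w"
    using det_bound[OF Mq_pos ctx] by (simp_all add: H_def h_def w_def)
  have bias: "H - ln c \<le> EF" "EF \<le> H"
    using bias[OF Mq_pos ctx N] by (simp_all add: H_def c_def EF_def F_def)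
  have cardG: "card (Gp p Mq) \<le> Mq ^ ?K" by (rule card_Gp[OF Mq_pos ctx])
  have "Gp p Mq \<noteq> {}" using sum_Pq_Gp[OF Mq_pos ctx] by auto
  then have cardpos: "card (Gp p Mq) \<ge> 1" using finite_Gp by (simp add: Suc_le_eq card_gt_0_iff)
  have Np: "real N > 0" using N by simp
  have c1: "c \<ge> 1" using cardpos Np by (simp add: c_def)
  have lnc: "ln c \<le> C"
  proof -
    have "real (card (Gp p Mq)) \<le> real Mq ^ ?K" using cardG by (metis of_nat_le_iff of_nat_power)
    then have "c \<le> 1 + (real Mq ^ ?K - 1) / real N" using Np by (simp add: c_def divide_right_mono)
    then show ?thesis unfolding C_def using c1 by simp
  qed
  have B0: "B \<ge> 0"
  proof -
    have "2 / \<delta> > 1" using \<delta> by simp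
    then have "ln (2 / \<delta>) > 0" by (rule ln_gt_zero)
    then show ?thesis using N by (simp add: B_def)
  qed
  have tB: "t > B" using Aw by (simp add: t_def)
  have t0: "t > 0" using tB B0 by simp
  define G where "G = {xs \<in> space (PP p N). \<bar>F xs - real ?K * ln (real Mq) - h\<bar> \<le> R}"
  have Gs: "G \<in> sets (PP p N)" unfolding G_def by measurable
  have sub: "space (PP p N) - {xs \<in> space (PP p N). \<bar>F xs - EF\<bar> \<ge> t} \<subseteq> G"
  proof
    fix xs assume xs: "xs \<in> space (PP p N) - {xs \<in> space (PP p N). \<bar>F xs - EF\<bar> \<ge> t}"
    then have lt: "\<bar>F xs - EF\<bar> < t" by auto
    have "\<bar>F xs - real ?K * ln (real Mq) - h\<bar> \<le> \<bar>F xs - EF\<bar> + \<bar>EF - H\<bar> + \<bar>H - real ?K * ln (real Mq) - h\<bar>"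
      by linarith
    also have "\<dots> \<le> t + C + w" using lt bias det lnc by linarith
    also have "\<dots> = R" by (simp add: t_def R_def)
    finally show "xs \<in> G" using xs by (simp add: G_def)
  qed
  have tail: "measure (PP p N) {xs \<in> space (PP p N). \<bar>F xs - EF\<bar> \<ge> t} < \<delta>"
  proof (cases "N = 1")
    case True
    have "{xs \<in> space (PP p N). \<bar>F xs - EF\<bar> \<ge> t} = {}"
    proof -
      have F0: "F xs = 0" for xs unfolding F_def True by (rule Hemp_one)
      then have "EF = 0" by (simp add: EF_def)
      then show ?thesis using F0 t0 by auto
    qed
    then have "measure (PP p N) {xs \<in> space (PP p N). \<bar>F xs - EF\<bar> \<ge> t} = 0" by (simp only: measure_empty)
    then show ?thesis using \<delta> by simp
  next
    case False
    then have N2: "N \<ge> 2" using N by simp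
    define c0 where "c0 = 2 * ln (real N) / real N"
    have lnN: "ln (real N) > 0" using N2 by simp
    have c0p: "c0 > 0" using lnN Np by (simp add: c0_def)
    have fb: "\<forall>xs\<in>space (PiM {..<N} (\<lambda>_. dens p)). \<bar>F xs\<bar> \<le> ln (real N)"
    proof
      fix xs :: "nat \<Rightarrow> real^'n"
      have "0 \<le> F xs" "F xs \<le> ln (real N)" unfolding F_def by (rule Hemp_bounds[OF N])+
      then show "\<bar>F xs\<bar> \<le> ln (real N)" by simp
    qed
    have fd: "\<forall>xs\<in>space (PiM {..<N} (\<lambda>_. dens p)). \<forall>i<N. \<forall>y\<in>space (dens p). \<bar>F xs - F (xs(i:=y))\<bar> \<le> c0"
    proof (intro ballI allI impI)
      fix xs :: "nat \<Rightarrow> real^'n" and i y assume i: "i < N"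
      show "\<bar>F xs - F (xs(i:=y))\<bar> \<le> c0"
        unfolding F_def c0_def by (rule Hemp_diff[OF N i]) simp
    qed
    have fm': "F \<in> borel_measurable (PiM {..<N} (\<lambda>_. dens p))" using Fm by (simp add: PP_def)
    have "measure (PP p N) {xs \<in> space (PP p N). \<bar>F xs - EF\<bar> \<ge> t} \<le> 2 * exp (-2 * t\<^sup>2 / (real N * c0\<^sup>2))"
      using mcdiarmid_abs[OF prob c0p _ t0 fm' fb fd] N by (simp add: PP_def EF_def)
    also have "\<dots> < 2 * exp (-2 * B\<^sup>2 / (real N * c0\<^sup>2))"
    proof -
      have "B\<^sup>2 < t\<^sup>2" using tB B0 by (intro power_strict_mono) auto
      then have "-2 * t\<^sup>2 / (real N * c0\<^sup>2) < -2 * B\<^sup>2 / (real N * c0\<^sup>2)"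
        using Np c0p by (intro divide_strict_right_mono) auto
      then show ?thesis by simp
    qed
    also have "-2 * B\<^sup>2 / (real N * c0\<^sup>2) = - ln (2 / \<delta>)"
    proof -
      have "1 \<le> 2 / \<delta>" using \<delta> by simp
      then have l2: "ln (2 / \<delta>) \<ge> 0" by (rule ln_ge_zero)
      have "B\<^sup>2 = 2 / real N * ln (2 / \<delta>) * (ln (real N))\<^sup>2"
        using l2 Np by (simp add: B_def power_mult_distrib)
      then show ?thesis using Np lnN by (simp add: c0_def power2_eq_square field_simps)
    qed
    also have "2 * exp (- ln (2 / \<delta>)) = \<delta>" using \<delta> by (simp add: exp_minus)
    finally show ?thesis .
  qed
  have "measure (PP p N) G \<ge> measure (PP p N) (space (PP p N) - {xs \<in> space (PP p N). \<bar>F xs - EF\<bar> \<ge> t})"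
    by (intro P.finite_measure_mono sub Gs)
  also have "measure (PP p N) (space (PP p N) - {xs \<in> space (PP p N). \<bar>F xs - EF\<bar> \<ge> t})
      = 1 - measure (PP p N) {xs \<in> space (PP p N). \<bar>F xs - EF\<bar> \<ge> t}"
    by (rule P.prob_compl) measurable
  finally have PG: "measure (PP p N) G > 1 - \<delta>" using tail by simp
  have Gs': "G \<in> sets (PiM {..<N} (\<lambda>_. borel))" using Gs sets_eq by simp
  have "measure (PP p N) G = measure M ((\<lambda>\<omega>. \<lambda>i\<in>{..<N}. X i \<omega>) -` G \<inter> space M)"
    unfolding Pdist[symmetric] by (rule measure_distr[OF fm Gs'])
  also have "(\<lambda>\<omega>. \<lambda>i\<in>{..<N}. X i \<omega>) -` G \<inter> space M = {\<omega> \<in> space M.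
        \<bar>entropy_estimator Mq N (\<lambda>i. X i \<omega>) - diff_entropy p\<bar>
          \<le> L * real CARD('n) / (2 * real Mq) * ln (real Mq * eta CARD('n) L)
             + sqrt (2 / real N * ln (2 / \<delta>)) * ln (real N)
             + ln (1 + (real Mq ^ CARD('n) - 1) / real N)}"
  proof -
    have sp: "(\<lambda>i\<in>{..<N}. X i \<omega>) \<in> space (PP p N)" if "\<omega> \<in> space M" for \<omega>
      using measurable_space[OF fm that] space_eq by simp
    show ?thesis
      unfolding G_def using sp by (auto simp: est h_def R_def A_def B_def C_def)
  qed
  finally show "measure M {\<omega> \<in> space M.
        \<bar>entropy_estimator Mq N (\<lambda>i. X i \<omega>) - diff_entropy p\<bar>
          \<le> L * real CARD('n) / (2 * real Mq) * ln (real Mq * eta CARD('n) L)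
             + sqrt (2 / real N * ln (2 / \<delta>)) * ln (real N)
             + ln (1 + (real Mq ^ CARD('n) - 1) / real N)} > 1 - \<delta>"
    using PG by simp
qed


end
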